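(* Let $d\geq 1$ and let $G=(V,E)$ be a graph. Suppose that $E=E_1\cup E_2$ is a partition of $E$ into non-empty subsets with $r_d(E)=r_d(E_1)+r_d(E_2)$, and let $G_1,G_2$ be the subgraphs induced by $E_1,E_2$. Then $M_{d,G}=M_{d,G_1}\times M_{d,G_2}$ under the identification $\mathbb{C}^E=\mathbb{C}^{E_1}\times\mathbb{C}^{E_2}$.
   Context: $r_d$ denotes the rank function of the $d$-dimensional generic rigidity matroid on edge sets (the rank of the rows of the rigidity matrix $R(G,p)$ indexed by those edges, for generic $p$; the row of $uv$ has $p(u)-p(v)$ in the columns of $u$, $p(v)-p(u)$ in those of $v$). For a graph $G=(V,E)$ on $n$ vertices, the measurement map $m_{d,G}:\mathbb{C}^{nd}\to\mathbb{C}^E$ sends $p$ to $(\sum_{k=1}^d(p(u)_k-p(v)_k)^2)_{uv\in E}$, and the measurement variety $M_{d,G}$ is the Zariski closure of $m_{d,G}(\mathbb{C}^{nd})$ in $\mathbb{C}^E$. The subgraph induced by an edge set consists of those edges and their end-vertices. *)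

theory Defs
  imports "HOL-Analysis.Analysis"
begin

(* Graphs: vertex set V :: 'v set, edge set E :: 'v set set of 2-element subsets of V.
   Configurations in dimension d: p :: 'v => nat => _, coordinate k < d of vertex v is p v k. *)

definition ends :: "'v set \<Rightarrow> 'v \<times> 'v" where
  "ends e = (SOME (u, v). u \<noteq> v \<and> e = {u, v})"

(* Row of the rigidity matrix R(G,p) indexed by the edge e = uv; columns are indexed by
   pairs (w,k), w a vertex, k < d a coordinate. *)
definition rig_row :: "nat \<Rightarrow> ('v \<Rightarrow> nat \<Rightarrow> real) \<Rightarrow> 'v set \<Rightarrow> ('v \<times> nat \<Rightarrow> real)" where
  "rig_row d p e = (\<lambda>(w, k). if k < d then
      (case ends e of (u, v) \<Rightarrow>
         if w = u then p u k - p v k else if w = v then p v k - p u k else 0)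
     else 0)"

definition rows_indep :: "nat \<Rightarrow> ('v \<Rightarrow> nat \<Rightarrow> real) \<Rightarrow> 'v set set \<Rightarrow> bool" where
  "rows_indep d p F \<longleftrightarrow>
     (\<forall>c :: 'v set \<Rightarrow> real. (\<lambda>x. \<Sum>e\<in>F. c e * rig_row d p e x) = (\<lambda>_. 0) \<longrightarrow> (\<forall>e\<in>F. c e = 0))"

definition rows_rank :: "nat \<Rightarrow> ('v \<Rightarrow> nat \<Rightarrow> real) \<Rightarrow> 'v set set \<Rightarrow> nat" where
  "rows_rank d p F = Max {card F' | F'. F' \<subseteq> F \<and> rows_indep d p F'}"

(* generic rank r_d(F): the rank attained at a generic configuration, i.e. the maximum
   of the rank over all (real) configurations *)
definition rig_rank :: "nat \<Rightarrow> 'v set set \<Rightarrow> nat" where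
  "rig_rank d F = Max {rows_rank d p F | p. True}"

inductive_set polyfun :: "'i set \<Rightarrow> (('i \<Rightarrow> complex) \<Rightarrow> complex) set" for X where
  pf_const: "(\<lambda>_. c) \<in> polyfun X"
| pf_var: "i \<in> X \<Longrightarrow> (\<lambda>x. x i) \<in> polyfun X"
| pf_add: "f \<in> polyfun X \<Longrightarrow> g \<in> polyfun X \<Longrightarrow> (\<lambda>x. f x + g x) \<in> polyfun X"
| pf_mult: "f \<in> polyfun X \<Longrightarrow> g \<in> polyfun X \<Longrightarrow> (\<lambda>x. f x * g x) \<in> polyfun X"

(* C^X, represented as functions vanishing outside X *)
definition cspace :: "'i set \<Rightarrow> ('i \<Rightarrow> complex) set" where
  "cspace X = {x. \<forall>i. i \<notin> X \<longrightarrow> x i = 0}"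

definition zariski_closure :: "'i set \<Rightarrow> ('i \<Rightarrow> complex) set \<Rightarrow> ('i \<Rightarrow> complex) set" where
  "zariski_closure X S =
     {x \<in> cspace X. \<forall>f \<in> polyfun X. (\<forall>y\<in>S. f y = 0) \<longrightarrow> f x = 0}"

definition config_space :: "nat \<Rightarrow> 'v set \<Rightarrow> ('v \<Rightarrow> nat \<Rightarrow> complex) set" where
  "config_space d V = {p. \<forall>v k. v \<notin> V \<or> d \<le> k \<longrightarrow> p v k = 0}"

definition meas_map :: "nat \<Rightarrow> 'v set set \<Rightarrow> ('v \<Rightarrow> nat \<Rightarrow> complex) \<Rightarrow> ('v set \<Rightarrow> complex)" where
  "meas_map d E p = (\<lambda>e. if e \<in> E then
      (case ends e of (u, v) \<Rightarrow> \<Sum>k<d. (p u k - p v k)^2) else 0)"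

definition meas_variety :: "nat \<Rightarrow> 'v set \<Rightarrow> 'v set set \<Rightarrow> ('v set \<Rightarrow> complex) set" where
  "meas_variety d V E = zariski_closure E (meas_map d E ` config_space d V)"

definition restrict_to :: "'i set \<Rightarrow> ('i \<Rightarrow> complex) \<Rightarrow> ('i \<Rightarrow> complex)" where
  "restrict_to X x = (\<lambda>i. if i \<in> X then x i else 0)"

end

theory Submission
  imports Defs "HOL-Computational_Algebra.Polynomial"
begin


lemma pf_dep: "f \<in> polyfun X \<Longrightarrow> (\<forall>i\<in>X. x i = y i) \<Longrightarrow> f x = f y"
  by (induction f rule: polyfun.induct) auto

lemma pf_mono: "f \<in> polyfun X \<Longrightarrow> X \<subseteq> Y \<Longrightarrow> f \<in> polyfun Y"
  by (induction f rule: polyfun.induct) (auto intro: polyfun.intros)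

lemma pf_subst: "f \<in> polyfun X \<Longrightarrow> (\<lambda>x. f (x(i := c))) \<in> polyfun (X - {i})"
proof (induction f rule: polyfun.induct)
  case (pf_var j)
  show ?case
  proof (cases "j = i")
    case True then show ?thesis by (simp add: polyfun.pf_const)
  next
    case False then show ?thesis using pf_var polyfun.pf_var[of j "X - {i}"] by simp
  qed
qed (auto intro: polyfun.intros)

lemma pf_univar: "f \<in> polyfun X \<Longrightarrow> \<exists>P. \<forall>t. f (x(i := t)) = poly P t"
proof (induction f rule: polyfun.induct)
  case (pf_const c) then show ?case by (rule exI[of _ "[:c:]"]) simp
next
  case (pf_var j) show ?case
  proof (cases "j = i")
    case True then show ?thesis by (intro exI[of _ "[:0,1:]"]) simp
  next
    case False then show ?thesis by (intro exI[of _ "[:x j:]"]) simp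
  qed
next
  case (pf_add f g) then obtain P Q where "\<forall>t. f (x(i := t)) = poly P t" "\<forall>t. g (x(i := t)) = poly Q t" by blast
  then show ?case by (intro exI[of _ "P + Q"]) (metis poly_add)
next
  case (pf_mult f g) then obtain P Q where "\<forall>t. f (x(i := t)) = poly P t" "\<forall>t. g (x(i := t)) = poly Q t" by blast
  then show ?case by (intro exI[of _ "P * Q"]) (metis poly_mult)
qed

lemma pf_identity:
  assumes "finite X" "f \<in> polyfun X" "\<forall>i\<in>X. infinite (S i)"
    and "\<forall>x. (\<forall>i\<in>X. x i \<in> S i) \<longrightarrow> f x = 0"
  shows "f y = 0"
  using assms
proof (induction X arbitrary: f y rule: finite_induct)
  case empty
  then show ?case using pf_dep[of f "{}" y y] by (metis empty_iff pf_dep)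
next
  case (insert i X)
  have fin: "infinite (S i)" using insert by auto
  have key: "f (x(i := t)) = 0" if x: "\<forall>j\<in>X. x j \<in> S j" for x t
  proof -
    obtain P where P: "\<forall>t. f (x(i := t)) = poly P t" using pf_univar[OF insert(4)] by blast
    have "S i \<subseteq> {t. poly P t = 0}"
    proof
      fix t assume "t \<in> S i"
      then have "\<forall>j\<in>insert i X. (x(i := t)) j \<in> S j" using x by auto
      then have "f (x(i := t)) = 0" using insert(6) by blast
      then show "t \<in> {t. poly P t = 0}" using P by auto
    qed
    then have "P = 0" using fin poly_roots_finite[of P] finite_subset by blast
    then show ?thesis using P by simp
  qed
  define t where "t = y i"
  have "(\<lambda>x. f (x(i := t))) \<in> polyfun (insert i X - {i})" using pf_subst[OF insert(4)] .
  then have pf: "(\<lambda>x. f (x(i := t))) \<in> polyfun X" using insert(2) by (simp add: insert_Diff_if)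
  have "(\<lambda>x. f (x(i := t))) y = 0"
    apply (rule insert.IH[OF pf])
    using insert.prems apply simp
    using key apply blast
    done
  then show ?case by (simp add: t_def)
qed

lemma pf_comp: "f \<in> polyfun X \<Longrightarrow> (\<forall>i\<in>X. (\<lambda>y. \<phi> y i) \<in> polyfun Y) \<Longrightarrow> (\<lambda>y. f (\<phi> y)) \<in> polyfun Y"
  by (induction f rule: polyfun.induct) (auto intro: polyfun.intros)

lemma pf_diff: "f \<in> polyfun X \<Longrightarrow> g \<in> polyfun X \<Longrightarrow> (\<lambda>x. f x - g x) \<in> polyfun X"
proof -
  assume a: "f \<in> polyfun X" "g \<in> polyfun X"
  have "(\<lambda>x. f x + (\<lambda>_. -1) x * g x) \<in> polyfun X"
    by (intro polyfun.intros a)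
  then show ?thesis by simp
qed

lemma pf_pow2: "f \<in> polyfun X \<Longrightarrow> (\<lambda>x. (f x)^2) \<in> polyfun X"
  using polyfun.pf_mult[of f X f] by (simp add: power2_eq_square)

lemma pf_sum: "finite K \<Longrightarrow> (\<forall>k\<in>K. (\<lambda>x. f k x) \<in> polyfun X) \<Longrightarrow> (\<lambda>x. \<Sum>k\<in>K. f k x) \<in> polyfun X"
  by (induction K rule: finite_induct) (auto intro: polyfun.intros)


definition beta :: "nat \<Rightarrow> 'v set \<Rightarrow> ('v \<Rightarrow> nat \<Rightarrow> real) \<Rightarrow> ('v \<Rightarrow> nat \<Rightarrow> real) \<Rightarrow> real" where
  "beta d e x y = (case ends e of (u, v) \<Rightarrow> \<Sum>k<d. (x u k - x v k) * (y u k - y v k))"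

definition nrm :: "'v set \<Rightarrow> nat \<Rightarrow> ('v \<Rightarrow> nat \<Rightarrow> real) \<Rightarrow> real" where
  "nrm V d x = (\<Sum>i\<in>V \<times> {..<d}. \<bar>x (fst i) (snd i)\<bar>)"

definition goodE :: "'v set \<Rightarrow> 'v set \<Rightarrow> bool" where
  "goodE V e \<longleftrightarrow> fst (ends e) \<in> V \<and> snd (ends e) \<in> V \<and> fst (ends e) \<noteq> snd (ends e)"

lemma beta_sym: "beta d e x y = beta d e y x"
  unfolding beta_def by (cases "ends e") (simp add: mult.commute)

lemma beta_add1: "beta d e (\<lambda>v k. x v k + y v k) w = beta d e x w + beta d e y w"
  unfolding beta_def by (cases "ends e") (simp add: sum.distrib[symmetric] algebra_simps)

lemma beta_diff1: "beta d e (\<lambda>v k. x v k - y v k) w = beta d e x w - beta d e y w"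
  unfolding beta_def by (cases "ends e") (simp add: sum_subtractf[symmetric] algebra_simps)

lemma beta_scale1: "beta d e (\<lambda>v k. a * x v k) w = a * beta d e x w"
  unfolding beta_def by (cases "ends e") (simp add: sum_distrib_left algebra_simps)

lemma beta_sum1: "beta d e (\<lambda>v k. \<Sum>j\<in>J. z j * W j v k) w = (\<Sum>j\<in>J. z j * beta d e (W j) w)"
proof (cases "ends e")
  case (Pair u v)
  have 1: "\<And>k. (\<Sum>j\<in>J. z j * W j u k) - (\<Sum>j\<in>J. z j * W j v k) = (\<Sum>j\<in>J. z j * (W j u k - W j v k))"
    by (simp add: sum_subtractf[symmetric] right_diff_distrib)
  have "beta d e (\<lambda>v k. \<Sum>j\<in>J. z j * W j v k) w = (\<Sum>k<d. \<Sum>j\<in>J. z j * ((W j u k - W j v k) * (w u k - w v k)))"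
    unfolding beta_def using Pair by (simp add: 1 sum_distrib_right mult.assoc)
  also have "\<dots> = (\<Sum>j\<in>J. \<Sum>k<d. z j * ((W j u k - W j v k) * (w u k - w v k)))"
    by (rule sum.swap)
  also have "\<dots> = (\<Sum>j\<in>J. z j * beta d e (W j) w)"
    unfolding beta_def using Pair by (simp add: sum_distrib_left)
  finally show ?thesis .
qed

lemma beta_add2: "beta d e w (\<lambda>v k. x v k + y v k) = beta d e w x + beta d e w y"
  unfolding beta_def by (cases "ends e") (simp add: sum.distrib[symmetric] algebra_simps)
lemma beta_diff2: "beta d e w (\<lambda>v k. x v k - y v k) = beta d e w x - beta d e w y"
  unfolding beta_def by (cases "ends e") (simp add: sum_subtractf[symmetric] algebra_simps)
lemma beta_scale2: "beta d e w (\<lambda>v k. a * x v k) = a * beta d e w x"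
  unfolding beta_def by (cases "ends e") (simp add: sum_distrib_left algebra_simps)
lemma beta_sum2: "beta d e w (\<lambda>v k. \<Sum>j\<in>J. z j * W j v k) = (\<Sum>j\<in>J. z j * beta d e w (W j))"
proof -
  have "beta d e w (\<lambda>v k. \<Sum>j\<in>J. z j * W j v k) = beta d e (\<lambda>v k. \<Sum>j\<in>J. z j * W j v k) w"
    by (rule beta_sym)
  also have "\<dots> = (\<Sum>j\<in>J. z j * beta d e (W j) w)" by (rule beta_sum1)
  also have "\<dots> = (\<Sum>j\<in>J. z j * beta d e w (W j))"
    by (rule sum.cong[OF refl]) (subst beta_sym, rule refl)
  finally show ?thesis .
qed

lemma gg_add: "beta d e (\<lambda>v k. c v k + w v k) (\<lambda>v k. c v k + w v k)
   = beta d e c c + 2 * beta d e c w + beta d e w w"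
  by (simp add: beta_add1 beta_add2 beta_sym[of d e w c])

lemma gg_diff: "beta d e x x - beta d e y y = beta d e (\<lambda>v k. x v k - y v k) (\<lambda>v k. x v k + y v k)"
  by (simp add: beta_diff1 beta_add2 beta_sym[of d e y x])

lemma nrm_nonneg: "0 \<le> nrm V d x"
  unfolding nrm_def by (simp add: sum_nonneg)

lemma nrm_add: "nrm V d (\<lambda>v k. x v k + y v k) \<le> nrm V d x + nrm V d y"
  unfolding nrm_def sum.distrib[symmetric] by (rule sum_mono) (simp add: abs_triangle_ineq)

lemma nrm_diff: "nrm V d (\<lambda>v k. x v k - y v k) \<le> nrm V d x + nrm V d y"
  unfolding nrm_def sum.distrib[symmetric] by (rule sum_mono) (simp add: abs_triangle_ineq4)

lemma nrm_scale: "nrm V d (\<lambda>v k. a * x v k) = \<bar>a\<bar> * nrm V d x"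
  unfolding nrm_def by (simp add: sum_distrib_left abs_mult)

lemma nrm_sum: "finite J \<Longrightarrow> nrm V d (\<lambda>v k. \<Sum>j\<in>J. z j * W j v k) \<le> (\<Sum>j\<in>J. \<bar>z j\<bar> * nrm V d (W j))"
proof -
  assume J: "finite J"
  have "nrm V d (\<lambda>v k. \<Sum>j\<in>J. z j * W j v k) \<le> (\<Sum>i\<in>V \<times> {..<d}. \<Sum>j\<in>J. \<bar>z j\<bar> * \<bar>W j (fst i) (snd i)\<bar>)"
    unfolding nrm_def by (rule sum_mono, rule order_trans[OF sum_abs]) (simp add: abs_mult)
  also have "\<dots> = (\<Sum>j\<in>J. \<bar>z j\<bar> * nrm V d (W j))"
    unfolding nrm_def sum_distrib_left by (rule sum.swap)
  finally show ?thesis .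
qed

lemma sum_prod_le: fixes a b :: "'k \<Rightarrow> real" shows "finite K \<Longrightarrow> (\<And>k. k \<in> K \<Longrightarrow> 0 \<le> a k) \<Longrightarrow> (\<And>k. k \<in> K \<Longrightarrow> 0 \<le> b k) \<Longrightarrow>
   (\<Sum>k\<in>K. a k * b k) \<le> (\<Sum>k\<in>K. a k) * (\<Sum>k\<in>K. b k)"
proof -
  assume K: "finite K" and a: "\<And>k. k \<in> K \<Longrightarrow> 0 \<le> a k" and b: "\<And>k. k \<in> K \<Longrightarrow> 0 \<le> b k"
  have "(\<Sum>k\<in>K. a k * b k) \<le> (\<Sum>k\<in>K. a k * (\<Sum>j\<in>K. b j))"
  proof (rule sum_mono)
    fix k assume k: "k \<in> K"
    have "b k \<le> (\<Sum>j\<in>K. b j)" using K b k by (intro member_le_sum) auto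
    then show "a k * b k \<le> a k * (\<Sum>j\<in>K. b j)" using a k by (simp add: mult_left_mono)
  qed
  then show ?thesis by (simp add: sum_distrib_right mult.commute)
qed

lemma pair_le_nrm:
  assumes "u \<in> V" "w \<in> V" "u \<noteq> w" "finite V"
  shows "(\<Sum>k<d. \<bar>x u k - x w k\<bar>) \<le> nrm V d x"
proof -
  have "(\<Sum>k<d. \<bar>x u k - x w k\<bar>) \<le> (\<Sum>k<d. \<bar>x u k\<bar> + \<bar>x w k\<bar>)"
    by (rule sum_mono) (simp add: abs_triangle_ineq4)
  also have "\<dots> = (\<Sum>a\<in>{u,w}. \<Sum>k<d. \<bar>x a k\<bar>)"
    using assms by (simp add: sum.distrib)
  also have "\<dots> = (\<Sum>i\<in>{u,w} \<times> {..<d}. \<bar>x (fst i) (snd i)\<bar>)"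
    by (subst sum.cartesian_product) (simp add: case_prod_beta)
  also have "\<dots> \<le> nrm V d x"
    unfolding nrm_def using assms by (intro sum_mono2) auto
  finally show ?thesis .
qed

lemma beta_bound:
  assumes "goodE V e" "finite V"
  shows "\<bar>beta d e x y\<bar> \<le> nrm V d x * nrm V d y"
proof (cases "ends e")
  case (Pair u w)
  have uw: "u \<in> V" "w \<in> V" "u \<noteq> w" using assms Pair unfolding goodE_def by auto
  have "\<bar>beta d e x y\<bar> \<le> (\<Sum>k<d. \<bar>x u k - x w k\<bar> * \<bar>y u k - y w k\<bar>)"
    unfolding beta_def using Pair by (simp add: order_trans[OF sum_abs] abs_mult)
  also have "\<dots> \<le> (\<Sum>k<d. \<bar>x u k - x w k\<bar>) * (\<Sum>k<d. \<bar>y u k - y w k\<bar>)"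
    by (rule sum_prod_le) auto
  also have "\<dots> \<le> nrm V d x * nrm V d y"
    by (rule mult_mono[OF pair_le_nrm[OF uw assms(2)] pair_le_nrm[OF uw assms(2)] nrm_nonneg]) (simp add: sum_nonneg)
  finally show ?thesis .
qed


definition ip :: "'i set \<Rightarrow> ('i \<Rightarrow> real) \<Rightarrow> ('i \<Rightarrow> real) \<Rightarrow> real" where
  "ip I x y = (\<Sum>i\<in>I. x i * y i)"

lemma ip_diff2: "ip I x (\<lambda>i. u i - w i) = ip I x u - ip I x w"
  unfolding ip_def by (simp add: sum_subtractf[symmetric] algebra_simps)
lemma ip_scale2: "ip I x (\<lambda>i. c * u i) = c * ip I x u"
  unfolding ip_def by (simp add: sum_distrib_left algebra_simps)
lemma ip_div2: "ip I x (\<lambda>i. u i / c) = ip I x u / c"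
  unfolding ip_def by (simp add: sum_divide_distrib)
lemma ip_sum2: "ip I x (\<lambda>i. \<Sum>b\<in>F. f b * W b i) = (\<Sum>b\<in>F. f b * ip I x (W b))"
proof -
  have "ip I x (\<lambda>i. \<Sum>b\<in>F. f b * W b i) = (\<Sum>i\<in>I. \<Sum>b\<in>F. f b * (x i * W b i))"
    unfolding ip_def by (simp add: sum_distrib_left algebra_simps)
  also have "\<dots> = (\<Sum>b\<in>F. \<Sum>i\<in>I. f b * (x i * W b i))" by (rule sum.swap)
  also have "\<dots> = (\<Sum>b\<in>F. f b * ip I x (W b))" unfolding ip_def by (simp add: sum_distrib_left)
  finally show ?thesis .
qed
lemma ip_sym: "ip I x y = ip I y x"
  unfolding ip_def by (simp add: mult.commute)
lemma ip_diff1: "ip I (\<lambda>i. u i - w i) x = ip I u x - ip I w x"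
  unfolding ip_def by (simp add: sum_subtractf[symmetric] algebra_simps)
lemma ip_sum1: "ip I (\<lambda>i. \<Sum>b\<in>F. f b * W b i) x = (\<Sum>b\<in>F. f b * ip I (W b) x)"
proof -
  have "ip I (\<lambda>i. \<Sum>b\<in>F. f b * W b i) x = ip I x (\<lambda>i. \<Sum>b\<in>F. f b * W b i)" by (rule ip_sym)
  also have "\<dots> = (\<Sum>b\<in>F. f b * ip I x (W b))" by (rule ip_sum2)
  also have "\<dots> = (\<Sum>b\<in>F. f b * ip I (W b) x)" by (rule sum.cong[OF refl]) (subst ip_sym, rule refl)
  finally show ?thesis .
qed

lemma dual_exists:
  fixes R :: "'b \<Rightarrow> 'i \<Rightarrow> real"
  assumes I: "finite I" and "finite F"
    and "\<forall>c. (\<forall>w. (\<Sum>b\<in>F. c b * ip I (R b) w) = 0) \<longrightarrow> (\<forall>b\<in>F. c b = 0)"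
  shows "\<exists>W. \<forall>b\<in>F. \<forall>b'\<in>F. ip I (R b) (W b') = (if b = b' then 1 else 0)"
  using assms(2,3)
proof (induction F rule: finite_induct)
  case empty
  then show ?case by simp
next
  case (insert a F)
  have indF: "\<forall>c. (\<forall>w. (\<Sum>b\<in>F. c b * ip I (R b) w) = 0) \<longrightarrow> (\<forall>b\<in>F. c b = 0)"
  proof (intro allI impI)
    fix c assume c: "\<forall>w. (\<Sum>b\<in>F. c b * ip I (R b) w) = 0"
    define c' where "c' = c(a := 0)"
    have "\<forall>w. (\<Sum>b\<in>insert a F. c' b * ip I (R b) w) = 0"
    proof
      fix w
      have "(\<Sum>b\<in>insert a F. c' b * ip I (R b) w) = (\<Sum>b\<in>F. c' b * ip I (R b) w)"
        using insert(1,2) by (simp add: c'_def)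
      also have "\<dots> = (\<Sum>b\<in>F. c b * ip I (R b) w)"
        using insert(1,2) by (intro sum.cong) (auto simp: c'_def)
      finally show "(\<Sum>b\<in>insert a F. c' b * ip I (R b) w) = 0" using c by simp
    qed
    then have "\<forall>b\<in>insert a F. c' b = 0" using insert.prems by blast
    then show "\<forall>b\<in>F. c b = 0" using insert(2) by (auto simp: c'_def split: if_splits)
  qed
  obtain W where W: "\<forall>b\<in>F. \<forall>b'\<in>F. ip I (R b) (W b') = (if b = b' then 1 else 0)"
    using insert.IH[OF indF] by blast
  define y where "y = (\<lambda>i. R a i - (\<Sum>b\<in>F. ip I (R a) (W b) * R b i))"
  have yw: "ip I y w = ip I (R a) w - (\<Sum>b\<in>F. ip I (R a) (W b) * ip I (R b) w)" for w
    unfolding y_def ip_diff1 ip_sum1 ..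
  have ynz: "\<exists>i\<in>I. y i \<noteq> 0"
  proof (rule ccontr)
    assume "\<not> ?thesis"
    then have y0: "ip I y w = 0" for w unfolding ip_def by simp
    define c where "c = (\<lambda>b. if b = a then 1 else - ip I (R a) (W b))"
    have "\<forall>w. (\<Sum>b\<in>insert a F. c b * ip I (R b) w) = 0"
    proof
      fix w
      have "(\<Sum>b\<in>insert a F. c b * ip I (R b) w) = ip I (R a) w + (\<Sum>b\<in>F. c b * ip I (R b) w)"
        using insert(1,2) by (simp add: c_def)
      also have "(\<Sum>b\<in>F. c b * ip I (R b) w) = (\<Sum>b\<in>F. - (ip I (R a) (W b) * ip I (R b) w))"
        using insert(2) by (intro sum.cong) (auto simp: c_def)
      also have "\<dots> = - (\<Sum>b\<in>F. ip I (R a) (W b) * ip I (R b) w)"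
        by (rule sum_negf)
      finally show "(\<Sum>b\<in>insert a F. c b * ip I (R b) w) = 0" using y0[of w] yw[of w] by simp
    qed
    then have "c a = 0" using insert.prems by blast
    then show False by (simp add: c_def)
  qed
  have ypos: "ip I y y > 0"
  proof -
    obtain i where "i \<in> I" "y i \<noteq> 0" using ynz by blast
    then show ?thesis unfolding ip_def using I
      by (intro sum_pos2[of I i]) (auto, metis not_real_square_gt_zero)
  qed
  define pr where "pr = (\<lambda>w i. w i - (\<Sum>b\<in>F. ip I (R b) w * W b i))"
  have pr_F: "ip I (R b') (pr w) = 0" if "b' \<in> F" for b' w
  proof -
    have "ip I (R b') (pr w) = ip I (R b') w - (\<Sum>b\<in>F. ip I (R b) w * ip I (R b') (W b))"
      unfolding pr_def ip_diff2 ip_sum2 ..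
    also have "(\<Sum>b\<in>F. ip I (R b) w * ip I (R b') (W b)) = (\<Sum>b\<in>F. if b = b' then ip I (R b) w else 0)"
      using W that by (intro sum.cong) auto
    also have "\<dots> = ip I (R b') w" using that insert(1) by simp
    finally show ?thesis by simp
  qed
  have pr_a: "ip I (R a) (pr w) = ip I y w" for w
    unfolding pr_def ip_diff2 ip_sum2 yw by (simp add: mult.commute)
  define Wa where "Wa = (\<lambda>i. pr y i / ip I y y)"
  have Wa_a: "ip I (R a) Wa = 1" unfolding Wa_def ip_div2 pr_a using ypos by simp
  have Wa_F: "ip I (R b) Wa = 0" if "b \<in> F" for b unfolding Wa_def ip_div2 pr_F[OF that] by simp
  define W' where "W' = (\<lambda>b. if b = a then Wa else (\<lambda>i. W b i - ip I (R a) (W b) * Wa i))"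
  have "\<forall>b\<in>insert a F. \<forall>b'\<in>insert a F. ip I (R b) (W' b') = (if b = b' then 1 else 0)"
  proof (intro ballI)
    fix b b' assume b: "b \<in> insert a F" and b': "b' \<in> insert a F"
    show "ip I (R b) (W' b') = (if b = b' then 1 else 0)"
    proof (cases "b' = a")
      case True
      then show ?thesis using b Wa_a Wa_F insert(2) by (auto simp: W'_def)
    next
      case False
      then have b'F: "b' \<in> F" using b' by auto
      have e: "ip I (R b) (W' b') = ip I (R b) (W b') - ip I (R a) (W b') * ip I (R b) Wa"
        using False unfolding W'_def by (simp add: ip_diff2 ip_scale2)
      show ?thesis
      proof (cases "b = a")
        case True
        then show ?thesis using e Wa_a False by simp
      next
        case False
        then have "b \<in> F" using b by auto
        then show ?thesis using e Wa_F W b'F by simp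
      qed
    qed
  qed
  then show ?case by blast
qed


lemma ends_good:
  assumes "e \<in> {{u, v} | u v. u \<in> V \<and> v \<in> V \<and> u \<noteq> v}"
  shows "goodE V e \<and> e = {fst (ends e), snd (ends e)}"
proof -
  obtain u v where uv: "e = {u, v}" "u \<in> V" "v \<in> V" "u \<noteq> v" using assms by blast
  have ee: "ends e = (SOME p. fst p \<noteq> snd p \<and> e = {fst p, snd p})"
    unfolding ends_def split_beta' ..
  have "fst (u, v) \<noteq> snd (u, v) \<and> e = {fst (u, v), snd (u, v)}" using uv by simp
  then have P: "fst (ends e) \<noteq> snd (ends e) \<and> e = {fst (ends e), snd (ends e)}"
    unfolding ee by (rule someI)
  have sub: "e \<subseteq> V" using uv by blast
  have "fst (ends e) \<in> e" "snd (ends e) \<in> e" using P by blast+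
  then show ?thesis unfolding goodE_def using P sub by blast
qed

lemma sum_pair: "(\<Sum>i\<in>A \<times> B. F i) = (\<Sum>a\<in>A. \<Sum>b\<in>B. F (a, b))"
  by (simp add: sum.cartesian_product)

lemma sum_if2:
  assumes "finite A" "u \<in> A" "v \<in> A" "u \<noteq> v"
  shows "(\<Sum>a\<in>A. (if a = u then X else 0) + (if a = v then Y else 0)) = X + (Y :: real)"
  using assms by (simp add: sum.distrib)

lemma beta_row:
  assumes "goodE V e" "finite V"
  shows "beta d e x w = (\<Sum>i\<in>V \<times> {..<d}. rig_row d x e i * w (fst i) (snd i))"
proof (cases "ends e")
  case (Pair u v)
  have uv: "u \<in> V" "v \<in> V" "u \<noteq> v" using assms Pair unfolding goodE_def by auto
  have r: "rig_row d x e (a, k) * w a k = (if a = u then (x u k - x v k) * w u k else 0) + (if a = v then (x v k - x u k) * w v k else 0)"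
    if "k < d" for a k
    using that uv Pair unfolding rig_row_def by auto
  have "(\<Sum>i\<in>V \<times> {..<d}. rig_row d x e i * w (fst i) (snd i)) = (\<Sum>a\<in>V. \<Sum>k<d. rig_row d x e (a, k) * w a k)"
    by (simp add: sum_pair)
  also have "\<dots> = (\<Sum>k<d. \<Sum>a\<in>V. rig_row d x e (a, k) * w a k)" by (rule sum.swap)
  also have "\<dots> = (\<Sum>k<d. (x u k - x v k) * w u k + (x v k - x u k) * w v k)"
  proof (rule sum.cong[OF refl])
    fix k assume "k \<in> {..<d}"
    then have "(\<Sum>a\<in>V. rig_row d x e (a, k) * w a k) = (\<Sum>a\<in>V. (if a = u then (x u k - x v k) * w u k else 0) + (if a = v then (x v k - x u k) * w v k else 0))"
      using r by (intro sum.cong) auto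
    also have "\<dots> = (x u k - x v k) * w u k + (x v k - x u k) * w v k"
      by (rule sum_if2[OF assms(2) uv])
    finally show "(\<Sum>a\<in>V. rig_row d x e (a, k) * w a k) = (x u k - x v k) * w u k + (x v k - x u k) * w v k" .
  qed
  also have "\<dots> = beta d e x w"
    unfolding beta_def Pair by (simp, intro sum.cong) (auto simp: algebra_simps)
  finally show ?thesis ..
qed

definition bindep :: "nat \<Rightarrow> ('v \<Rightarrow> nat \<Rightarrow> real) \<Rightarrow> 'v set set \<Rightarrow> bool" where
  "bindep d x F \<longleftrightarrow> (\<forall>c. (\<forall>w. (\<Sum>e\<in>F. c e * beta d e x w) = 0) \<longrightarrow> (\<forall>e\<in>F. c e = 0))"

lemma rig_row_out:
  assumes "goodE V e" "\<not> (a \<in> V \<and> k < d)"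
  shows "rig_row d x e (a, k) = 0"
  using assms unfolding rig_row_def goodE_def by (cases "ends e") auto

lemma rows_indep_bindep:
  assumes fV: "finite V" and good: "\<forall>e\<in>F. goodE V e" and fF: "finite F" and ri: "rows_indep d x F"
  shows "bindep d x F"
  unfolding bindep_def
proof (intro allI impI)
  fix c assume c: "\<forall>w. (\<Sum>e\<in>F. c e * beta d e x w) = 0"
  have "(\<lambda>i. \<Sum>e\<in>F. c e * rig_row d x e i) = (\<lambda>_. 0)"
  proof
    fix i show "(\<Sum>e\<in>F. c e * rig_row d x e i) = 0"
    proof (cases i)
      case (Pair a k)
      show ?thesis
      proof (cases "a \<in> V \<and> k < d")
        case True
        define w where "w = (\<lambda>v j. if v = a \<and> j = k then 1 else (0::real))"
        have "beta d e x w = rig_row d x e (a, k)" if "e \<in> F" for e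
        proof -
          have "beta d e x w = (\<Sum>i\<in>V \<times> {..<d}. rig_row d x e i * w (fst i) (snd i))"
            using good that by (simp add: beta_row[OF _ fV])
          also have "\<dots> = (\<Sum>i\<in>V \<times> {..<d}. if i = (a, k) then rig_row d x e i else 0)"
            unfolding w_def by (intro sum.cong) auto
          also have "\<dots> = rig_row d x e (a, k)" using True fV by simp
          finally show ?thesis .
        qed
        then have "(\<Sum>e\<in>F. c e * rig_row d x e (a, k)) = (\<Sum>e\<in>F. c e * beta d e x w)" by simp
        then show ?thesis using c Pair by simp
      next
        case False
        then have "\<forall>e\<in>F. rig_row d x e (a, k) = 0"
          using good by (intro ballI) (rule rig_row_out[OF bspec[OF good] False])
        then show ?thesis using Pair by simp
      qed
    qed
  qed
  then show "\<forall>e\<in>F. c e = 0" using ri unfolding rows_indep_def by blast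
qed

lemma bindep_rows_indep:
  assumes fV: "finite V" and good: "\<forall>e\<in>F. goodE V e" and fF: "finite F" and bi: "bindep d x F"
  shows "rows_indep d x F"
  unfolding rows_indep_def
proof (intro allI impI)
  fix c assume c: "(\<lambda>i. \<Sum>e\<in>F. c e * rig_row d x e i) = (\<lambda>_. 0)"
  have "(\<Sum>e\<in>F. c e * beta d e x w) = 0" for w
  proof -
    have "(\<Sum>e\<in>F. c e * beta d e x w) = (\<Sum>e\<in>F. \<Sum>i\<in>V \<times> {..<d}. c e * (rig_row d x e i * w (fst i) (snd i)))"
      using good by (intro sum.cong refl) (simp add: beta_row[OF _ fV] sum_distrib_left)
    also have "\<dots> = (\<Sum>i\<in>V \<times> {..<d}. \<Sum>e\<in>F. c e * (rig_row d x e i * w (fst i) (snd i)))" by (rule sum.swap)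
    also have "\<dots> = (\<Sum>i\<in>V \<times> {..<d}. (\<Sum>e\<in>F. c e * rig_row d x e i) * w (fst i) (snd i))"
      by (simp add: sum_distrib_right mult.assoc)
    also have "\<dots> = 0" using fun_cong[OF c] by simp
    finally show ?thesis .
  qed
  then show "\<forall>e\<in>F. c e = 0" using bi unfolding bindep_def by blast
qed

lemma bindep_subset:
  assumes "bindep d x F" "G \<subseteq> F" "finite F"
  shows "bindep d x G"
  unfolding bindep_def
proof (intro allI impI)
  fix c assume c: "\<forall>w. (\<Sum>e\<in>G. c e * beta d e x w) = 0"
  define c' where "c' = (\<lambda>e. if e \<in> G then c e else 0)"
  have "(\<Sum>e\<in>F. c' e * beta d e x w) = 0" for w
  proof -
    have "(\<Sum>e\<in>F. c' e * beta d e x w) = (\<Sum>e\<in>G. c e * beta d e x w)"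
      using assms(2,3) by (subst sum.mono_neutral_right[of F G]) (auto simp: c'_def)
    then show ?thesis using c by simp
  qed
  then have "\<forall>e\<in>F. c' e = 0" using assms(1) unfolding bindep_def by blast
  then show "\<forall>e\<in>G. c e = 0" using assms(2) unfolding c'_def by (metis subsetD)
qed

lemma dual_beta:
  assumes fV: "finite V" and good: "\<forall>e\<in>B. goodE V e" and fB: "finite B" and bi: "bindep d p0 B"
  shows "\<exists>W. \<forall>b\<in>B. \<forall>b'\<in>B. beta d b p0 (W b') = (if b = b' then 1 else 0)"
proof -
  let ?I = "V \<times> {..<d}"
  let ?R = "\<lambda>b. rig_row d p0 b"
  have eq: "beta d b p0 w = ip ?I (?R b) (\<lambda>i. w (fst i) (snd i))" if "b \<in> B" for b w
    unfolding ip_def using good that by (simp add: beta_row[OF _ fV])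
  have "\<forall>c. (\<forall>w. (\<Sum>b\<in>B. c b * ip ?I (?R b) w) = 0) \<longrightarrow> (\<forall>b\<in>B. c b = 0)"
  proof (intro allI impI)
    fix c assume c: "\<forall>w. (\<Sum>b\<in>B. c b * ip ?I (?R b) w) = 0"
    have "(\<Sum>b\<in>B. c b * beta d b p0 w) = 0" for w
      using c[rule_format, of "\<lambda>i. w (fst i) (snd i)"] eq by simp
    then show "\<forall>b\<in>B. c b = 0" using bi unfolding bindep_def by blast
  qed
  then obtain W where W: "\<forall>b\<in>B. \<forall>b'\<in>B. ip ?I (?R b) (W b') = (if b = b' then 1 else 0)"
    using dual_exists[of ?I B ?R] fV fB by blast
  show ?thesis
    by (rule exI[of _ "\<lambda>b v k. W b (v, k)"]) (use W eq in simp)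
qed


lemma bindep_near:
  assumes fB: "finite B" and W: "\<forall>b\<in>B. \<forall>b'\<in>B. beta d b p0 (W b') = (if b = b' then 1 else 0)"
    and small: "\<forall>b'\<in>B. (\<Sum>b\<in>B. \<bar>beta d b (\<lambda>v k. m v k - p0 v k) (W b')\<bar>) < 1"
  shows "bindep d m B"
  unfolding bindep_def
proof (intro allI impI)
  fix c assume c: "\<forall>w. (\<Sum>b\<in>B. c b * beta d b m w) = 0"
  let ?D = "\<lambda>v k. m v k - p0 v k"
  have eq: "c b' = - (\<Sum>b\<in>B. c b * beta d b ?D (W b'))" if b': "b' \<in> B" for b'
  proof -
    have sh: "beta d b m (W b') = beta d b p0 (W b') + beta d b ?D (W b')" for b
      by (simp add: beta_diff1)
    have "0 = (\<Sum>b\<in>B. c b * beta d b m (W b'))" using c by simp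
    also have "\<dots> = (\<Sum>b\<in>B. c b * beta d b p0 (W b')) + (\<Sum>b\<in>B. c b * beta d b ?D (W b'))"
      unfolding sh by (simp add: distrib_left sum.distrib)
    also have "(\<Sum>b\<in>B. c b * beta d b p0 (W b')) = (\<Sum>b\<in>B. if b = b' then c b else 0)"
      using W b' by (intro sum.cong) auto
    also have "\<dots> = c b'" using fB b' by simp
    finally show ?thesis by linarith
  qed
  show "\<forall>b\<in>B. c b = 0"
  proof (cases "B = {}")
    case True then show ?thesis by simp
  next
    case False
    define M where "M = Max ((\<lambda>b. \<bar>c b\<bar>) ` B)"
    have "M \<in> (\<lambda>b. \<bar>c b\<bar>) ` B" unfolding M_def using fB False by (intro Max_in) auto
    then obtain b0 where b0: "b0 \<in> B" "\<bar>c b0\<bar> = M" by auto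
    have Mge: "\<bar>c b\<bar> \<le> M" if "b \<in> B" for b
      unfolding M_def using fB that by (intro Max_ge) auto
    have M0: "0 \<le> M" using b0 by linarith
    let ?s = "\<Sum>b\<in>B. \<bar>beta d b ?D (W b0)\<bar>"
    have "M = \<bar>\<Sum>b\<in>B. c b * beta d b ?D (W b0)\<bar>" using eq[OF b0(1)] b0(2) by simp
    also have "\<dots> \<le> (\<Sum>b\<in>B. \<bar>c b\<bar> * \<bar>beta d b ?D (W b0)\<bar>)"
      by (rule order_trans[OF sum_abs]) (simp add: abs_mult)
    also have "\<dots> \<le> (\<Sum>b\<in>B. M * \<bar>beta d b ?D (W b0)\<bar>)"
      by (rule sum_mono) (simp add: Mge mult_right_mono)
    also have "\<dots> = M * ?s" by (simp add: sum_distrib_left)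
    finally have "M \<le> M * ?s" .
    moreover have s1: "?s < 1" using small b0(1) by blast
    ultimately have Mz: "M = 0"
    proof (cases "M = 0")
      case False
      then have "M > 0" using M0 by simp
      then have "M * ?s < M * 1" using s1 by (intro mult_strict_left_mono)
      then show ?thesis using \<open>M \<le> M * ?s\<close> by simp
    qed
    show ?thesis
    proof
      fix b assume "b \<in> B"
      then have "\<bar>c b\<bar> \<le> 0" using Mge Mz by metis
      then show "c b = 0" by simp
    qed
  qed
qed

lemma span_lemma:
  assumes fB: "finite B1" and e: "e \<notin> B1" and bi: "bindep d m B1" and nbi: "\<not> bindep d m (insert e B1)"
  shows "\<exists>a. \<forall>w. beta d e m w = (\<Sum>b\<in>B1. a b * beta d b m w)"
proof -
  obtain c where c: "\<forall>w. (\<Sum>b\<in>insert e B1. c b * beta d b m w) = 0" and nz: "\<exists>b\<in>insert e B1. c b \<noteq> 0"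
    using nbi unfolding bindep_def by blast
  have c': "c e * beta d e m w + (\<Sum>b\<in>B1. c b * beta d b m w) = 0" for w
    using c fB e by simp
  have ce: "c e \<noteq> 0"
  proof
    assume "c e = 0"
    then have "\<forall>w. (\<Sum>b\<in>B1. c b * beta d b m w) = 0" using c' by simp
    then have "\<forall>b\<in>B1. c b = 0" using bi unfolding bindep_def by blast
    then show False using nz \<open>c e = 0\<close> by blast
  qed
  show ?thesis
  proof (intro exI allI)
    fix w
    have "beta d e m w = - (\<Sum>b\<in>B1. c b * beta d b m w) / c e"
      using c'[of w] ce by (simp add: field_simps)
    also have "\<dots> = (\<Sum>b\<in>B1. (- c b / c e) * beta d b m w)"
      by (simp add: sum_divide_distrib sum_negf[symmetric])
    finally show "beta d e m w = (\<Sum>b\<in>B1. (- c b / c e) * beta d b m w)" .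
  qed
qed

lemma gg_mid:
  "beta d f s s - beta d f p p = 2 * beta d f (\<lambda>v k. (s v k + p v k) / 2) (\<lambda>v k. s v k - p v k)"
proof -
  have "beta d f s s - beta d f p p = beta d f (\<lambda>v k. s v k - p v k) (\<lambda>v k. s v k + p v k)"
    by (rule gg_diff)
  also have "\<dots> = beta d f (\<lambda>v k. s v k + p v k) (\<lambda>v k. s v k - p v k)" by (rule beta_sym)
  also have "(\<lambda>v k. s v k + p v k) = (\<lambda>v k. 2 * ((s v k + p v k) / 2))" by (simp add: fun_eq_iff)
  also have "beta d f \<dots> (\<lambda>v k. s v k - p v k) = 2 * beta d f (\<lambda>v k. (s v k + p v k) / 2) (\<lambda>v k. s v k - p v k)"
    by (rule beta_scale1)
  finally show ?thesis .
qed

lemma midpoint_lemma: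
  assumes span: "\<forall>w. beta d e (\<lambda>v k. (s v k + p v k) / 2) w = (\<Sum>b\<in>B1. a b * beta d b (\<lambda>v k. (s v k + p v k) / 2) w)"
    and eqs: "\<forall>b\<in>B1. beta d b s s = beta d b p p"
  shows "beta d e s s = beta d e p p"
proof -
  let ?m = "\<lambda>v k. (s v k + p v k) / 2"
  let ?D = "\<lambda>v k. s v k - p v k"
  have "beta d e s s - beta d e p p = 2 * beta d e ?m ?D" by (rule gg_mid)
  also have "\<dots> = 2 * (\<Sum>b\<in>B1. a b * beta d b ?m ?D)" using span by simp
  also have "\<dots> = (\<Sum>b\<in>B1. a b * (2 * beta d b ?m ?D))" by (simp add: sum_distrib_left algebra_simps)
  also have "\<dots> = (\<Sum>b\<in>B1. a b * (beta d b s s - beta d b p p))" by (simp only: gg_mid)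
  also have "\<dots> = 0" using eqs by simp
  finally show ?thesis by simp
qed

lemma rows_indep_empty: "rows_indep d p {}"
  unfolding rows_indep_def by simp

lemma rr_set_finite: "finite F0 \<Longrightarrow> finite {card F' | F'. F' \<subseteq> F0 \<and> rows_indep d p F'}"
proof -
  assume "finite F0"
  have "{card F' | F'. F' \<subseteq> F0 \<and> rows_indep d p F'} \<subseteq> card ` Pow F0" by blast
  then show ?thesis using \<open>finite F0\<close> finite_subset by blast
qed

lemma rows_rank_le: "finite F0 \<Longrightarrow> rows_rank d p F0 \<le> card F0"
  unfolding rows_rank_def
  by (rule Max.boundedI) (auto simp: rr_set_finite intro: card_mono rows_indep_empty)

lemma card_le_rows_rank: "finite F0 \<Longrightarrow> F \<subseteq> F0 \<Longrightarrow> rows_indep d p F \<Longrightarrow> card F \<le> rows_rank d p F0"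
  unfolding rows_rank_def by (rule Max_ge) (auto simp: rr_set_finite)

lemma rig_set_finite: "finite F0 \<Longrightarrow> finite {rows_rank d p F0 | p. True}"
proof -
  assume f: "finite F0"
  have "{rows_rank d p F0 | p. True} \<subseteq> {..card F0}" using rows_rank_le[OF f] by auto
  then show ?thesis using finite_subset by blast
qed

lemma rows_rank_le_rig: "finite F0 \<Longrightarrow> rows_rank d p F0 \<le> rig_rank d F0"
  unfolding rig_rank_def by (rule Max_ge) (use rig_set_finite[of F0 d] in auto)

lemma rig_attained: "finite F0 \<Longrightarrow> \<exists>p. rows_rank d p F0 = rig_rank d F0"
proof -
  assume f: "finite F0"
  have "rig_rank d F0 \<in> {rows_rank d p F0 | p. True}"
    unfolding rig_rank_def by (rule Max_in) (use rig_set_finite[OF f, of d] in auto)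
  then show ?thesis by auto
qed

lemma rows_rank_attained: "finite F0 \<Longrightarrow> \<exists>F. F \<subseteq> F0 \<and> rows_indep d p F \<and> card F = rows_rank d p F0"
proof -
  assume f: "finite F0"
  have "rows_rank d p F0 \<in> {card F' | F'. F' \<subseteq> F0 \<and> rows_indep d p F'}"
    unfolding rows_rank_def by (rule Max_in) (auto simp: rr_set_finite[OF f] intro: rows_indep_empty)
  then show ?thesis by auto
qed


lemma beta_tendsto:
  assumes "\<And>v k. (\<lambda>n. X n v k) \<longlonglongrightarrow> X0 v k" "\<And>v k. (\<lambda>n. Y n v k) \<longlonglongrightarrow> Y0 v k"
  shows "(\<lambda>n. beta d e (X n) (Y n)) \<longlonglongrightarrow> beta d e X0 Y0"
proof (cases "ends e")
  case (Pair u w)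
  show ?thesis unfolding beta_def Pair case_prod_conv
    by (intro tendsto_sum tendsto_mult tendsto_diff assms)
qed

lemma beta_zero2: "beta d e x (\<lambda>v k. 0) = 0"
  unfolding beta_def by (cases "ends e") simp

definition Wz :: "'b set \<Rightarrow> ('b \<Rightarrow> 'v \<Rightarrow> nat \<Rightarrow> real) \<Rightarrow> ('b \<Rightarrow> real) \<Rightarrow> 'v \<Rightarrow> nat \<Rightarrow> real" where
  "Wz B W z = (\<lambda>v k. \<Sum>b\<in>B. z b * W b v k)"

lemma Wz_diff: "(\<lambda>v k. Wz B W z v k - Wz B W z' v k) = Wz B W (\<lambda>b. z b - z' b)"
  unfolding Wz_def by (simp add: fun_eq_iff sum_subtractf[symmetric] algebra_simps)

lemma Wz_zero: "Wz B W (\<lambda>b. 0) = (\<lambda>v k. 0)"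
  unfolding Wz_def by simp

definition zn :: "'b set \<Rightarrow> ('b \<Rightarrow> real) \<Rightarrow> real" where
  "zn B z = (\<Sum>b\<in>B. \<bar>z b\<bar>)"

lemma zn_nonneg: "0 \<le> zn B z" unfolding zn_def by (simp add: sum_nonneg)

lemma nrm_Wz:
  assumes "finite B" "\<forall>b\<in>B. nrm V d (W b) \<le> Om"
  shows "nrm V d (Wz B W z) \<le> Om * zn B z"
proof -
  have "nrm V d (Wz B W z) \<le> (\<Sum>b\<in>B. \<bar>z b\<bar> * nrm V d (W b))"
    unfolding Wz_def by (rule nrm_sum[OF assms(1)])
  also have "\<dots> \<le> (\<Sum>b\<in>B. \<bar>z b\<bar> * Om)"
    using assms(2) by (intro sum_mono mult_left_mono) auto
  also have "\<dots> = Om * zn B z" unfolding zn_def by (simp add: sum_distrib_left mult.commute)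
  finally show ?thesis .
qed

lemma zn_triangle: "zn B (\<lambda>b. x b - y b) \<le> zn B x + zn B y"
  unfolding zn_def sum.distrib[symmetric] by (rule sum_mono) (simp add: abs_triangle_ineq4)

lemma zn_le_diff: "zn B x \<le> zn B y + zn B (\<lambda>b. x b - y b)"
  unfolding zn_def sum.distrib[symmetric] by (rule sum_mono) (metis abs_triangle_ineq add.commute diff_add_cancel)

lemma contraction:
  assumes fV: "finite V" and fB: "finite B" and good: "\<forall>b\<in>B. goodE V b"
    and dual: "\<forall>b\<in>B. \<forall>b'\<in>B. beta d b p0 (W b') = (if b = b' then 1 else 0)"
    and eps: "\<epsilon> > 0"
  shows "\<exists>\<delta>>0. \<forall>c y. nrm V d (\<lambda>v k. c v k - p0 v k) \<le> \<delta> \<longrightarrow> (\<forall>b\<in>B. \<bar>y b - beta d b c c\<bar> \<le> \<delta>) \<longrightarrow>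
     (\<exists>w. nrm V d w \<le> \<epsilon> \<and> (\<forall>b\<in>B. beta d b (\<lambda>v k. c v k + w v k) (\<lambda>v k. c v k + w v k) = y b))"
proof -
  define Om where "Om = 1 + (\<Sum>b\<in>B. nrm V d (W b))"
  have Om1: "Om \<ge> 1" unfolding Om_def by (simp add: sum_nonneg nrm_nonneg)
  have OmW: "\<forall>b\<in>B. nrm V d (W b) \<le> Om"
  proof
    fix b assume "b \<in> B"
    then have "nrm V d (W b) \<le> (\<Sum>b\<in>B. nrm V d (W b))" using fB by (intro member_le_sum) (auto simp: nrm_nonneg)
    then show "nrm V d (W b) \<le> Om" unfolding Om_def by simp
  qed
  define K where "K = real (card B) + 1"
  have K1: "K \<ge> 1" unfolding K_def by simp
  define \<rho> where "\<rho> = min (\<epsilon> / Om) (1 / (4 * K * Om^2))"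
  have rho0: "\<rho> > 0" unfolding \<rho>_def using eps Om1 K1 by simp
  have rhoe: "Om * \<rho> \<le> \<epsilon>" unfolding \<rho>_def using Om1 by (simp add: min_def field_simps)
  have rhoK: "Om^2 * \<rho> \<le> 1 / (4 * K)" unfolding \<rho>_def using Om1 K1 by (simp add: min_def field_simps)
  define \<delta> where "\<delta> = min (1 / (4 * K * Om)) (\<rho> / K)"
  have d0: "\<delta> > 0" unfolding \<delta>_def using rho0 Om1 K1 by simp
  have dOm: "\<delta> * Om \<le> 1 / (4 * K)" unfolding \<delta>_def using Om1 K1 by (simp add: min_def field_simps)
  have dK: "K * \<delta> \<le> \<rho>" unfolding \<delta>_def using K1 by (simp add: min_def field_simps)
  show ?thesis
  proof (intro exI[of _ \<delta>] conjI allI impI d0)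
    fix c y assume cD: "nrm V d (\<lambda>v k. c v k - p0 v k) \<le> \<delta>" and yD: "\<forall>b\<in>B. \<bar>y b - beta d b c c\<bar> \<le> \<delta>"
    let ?D = "\<lambda>v k. c v k - p0 v k"
    define T where "T = (\<lambda>z b. (y b - beta d b c c) / 2 - beta d b ?D (Wz B W z) - beta d b (Wz B W z) (Wz B W z) / 2)"
    have nW: "nrm V d (Wz B W z) \<le> Om * zn B z" for z using nrm_Wz[OF fB OmW] .
    have lip: "zn B (\<lambda>b. T z b - T z' b) \<le> zn B (\<lambda>b. z b - z' b) / 2" if zr: "zn B z \<le> \<rho>" "zn B z' \<le> \<rho>" for z z'
    proof -
      let ?h = "\<lambda>b. z b - z' b"
      let ?S = "\<lambda>v k. Wz B W z v k + Wz B W z' v k"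
      have per: "\<bar>T z b - T z' b\<bar> \<le> (\<delta> * Om + Om^2 * \<rho>) * zn B ?h" if b: "b \<in> B" for b
      proof -
        have a1: "beta d b ?D (Wz B W z) - beta d b ?D (Wz B W z') = beta d b ?D (Wz B W ?h)"
          by (simp only: beta_diff2[symmetric] Wz_diff)
        have a2: "beta d b (Wz B W z) (Wz B W z) - beta d b (Wz B W z') (Wz B W z') = beta d b (Wz B W ?h) ?S"
          by (simp only: gg_diff Wz_diff)
        have e1: "T z b - T z' b = - (beta d b ?D (Wz B W z) - beta d b ?D (Wz B W z'))
             - (beta d b (Wz B W z) (Wz B W z) - beta d b (Wz B W z') (Wz B W z')) / 2"
          unfolding T_def by (simp add: field_simps)
        have gb: "goodE V b" using good b by blast
        have b1: "\<bar>beta d b ?D (Wz B W ?h)\<bar> \<le> \<delta> * (Om * zn B ?h)"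
          using beta_bound[OF gb fV, of d ?D "Wz B W ?h"] cD nW[of ?h]
          by (meson mult_mono nrm_nonneg order_trans)
        have nS: "nrm V d ?S \<le> Om * zn B z + Om * zn B z'"
          using nrm_add[of V d "Wz B W z" "Wz B W z'"] nW[of z] nW[of z'] by linarith
        have nS2: "nrm V d ?S \<le> 2 * Om * \<rho>"
        proof -
          have "Om * zn B z \<le> Om * \<rho>" "Om * zn B z' \<le> Om * \<rho>" using zr Om1 by (auto intro: mult_left_mono)
          then show ?thesis using nS by linarith
        qed
        have b2: "\<bar>beta d b (Wz B W ?h) ?S\<bar> \<le> (Om * zn B ?h) * (2 * Om * \<rho>)"
          using beta_bound[OF gb fV, of d "Wz B W ?h" ?S] nW[of ?h] nS2
          by (meson mult_mono nrm_nonneg order_trans zn_nonneg)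
        have "\<bar>T z b - T z' b\<bar> \<le> \<bar>beta d b ?D (Wz B W ?h)\<bar> + \<bar>beta d b (Wz B W ?h) ?S\<bar> / 2"
          unfolding e1 a1 a2 by linarith
        also have "\<dots> \<le> \<delta> * (Om * zn B ?h) + (Om * zn B ?h) * (2 * Om * \<rho>) / 2"
          using b1 b2 by linarith
        also have "\<dots> = (\<delta> * Om + Om^2 * \<rho>) * zn B ?h" by (simp add: power2_eq_square algebra_simps)
        finally show ?thesis .
      qed
      have "zn B (\<lambda>b. T z b - T z' b) \<le> (\<Sum>b\<in>B. (\<delta> * Om + Om^2 * \<rho>) * zn B ?h)"
        unfolding zn_def by (rule sum_mono) (use per in \<open>simp add: zn_def\<close>)
      also have "\<dots> = real (card B) * ((\<delta> * Om + Om^2 * \<rho>) * zn B ?h)" by simp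
      also have "\<dots> \<le> K * ((1 / (4 * K) + 1 / (4 * K)) * zn B ?h)"
      proof (rule mult_mono)
        show "real (card B) \<le> K" unfolding K_def by simp
        show "(\<delta> * Om + Om^2 * \<rho>) * zn B ?h \<le> (1 / (4 * K) + 1 / (4 * K)) * zn B ?h"
          using dOm rhoK by (intro mult_right_mono zn_nonneg) auto
      qed (use K1 d0 rho0 Om1 in \<open>auto intro!: mult_nonneg_nonneg zn_nonneg add_nonneg_nonneg\<close>)
      also have "\<dots> = zn B ?h / 2" using K1 by (simp add: field_simps)
      finally show ?thesis .
    qed
    have T0: "zn B (T (\<lambda>b. 0)) \<le> \<rho> / 2"
    proof -
      have "T (\<lambda>b. 0) = (\<lambda>b. (y b - beta d b c c) / 2)"
        unfolding T_def Wz_zero by (simp add: beta_zero2)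
      then have "zn B (T (\<lambda>b. 0)) = (\<Sum>b\<in>B. \<bar>y b - beta d b c c\<bar> / 2)" unfolding zn_def by simp
      also have "\<dots> \<le> (\<Sum>b\<in>B. \<delta> / 2)" using yD by (intro sum_mono) auto
      also have "\<dots> = real (card B) * \<delta> / 2" by simp
      also have "\<dots> \<le> K * \<delta> / 2" unfolding K_def using d0 by (simp add: field_simps)
      also have "\<dots> \<le> \<rho> / 2" using dK by simp
      finally show ?thesis .
    qed
    have Tball: "zn B (T z) \<le> \<rho>" if "zn B z \<le> \<rho>" for z
    proof -
      have z0: "zn B (\<lambda>b::'a set. 0::real) \<le> \<rho>" using rho0 by (simp add: zn_def)
      have "zn B (T z) \<le> zn B (T (\<lambda>b. 0)) + zn B (\<lambda>b. T z b - T (\<lambda>b. 0) b)" by (rule zn_le_diff)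
      also have "\<dots> \<le> \<rho> / 2 + zn B (\<lambda>b. z b - 0) / 2" using T0 lip[OF that z0] by linarith
      also have "\<dots> \<le> \<rho>" using that by simp
      finally show ?thesis .
    qed
    define zs where "zs n = (T ^^ n) (\<lambda>b. 0)" for n
    have zs_Suc: "zs (Suc n) = T (zs n)" for n by (simp add: zs_def)
    have zsb: "zn B (zs n) \<le> \<rho>" for n
    proof (induction n)
      case 0 then show ?case using rho0 by (simp add: zs_def zn_def)
    next
      case (Suc n) then show ?case unfolding zs_Suc by (rule Tball)
    qed
    have dif: "zn B (\<lambda>b. zs (Suc n) b - zs n b) \<le> \<rho> * (1/2)^n" for n
    proof (induction n)
      case 0 then show ?case using T0 rho0 by (simp add: zs_def)
    next
      case (Suc n)
      have "zn B (\<lambda>b. zs (Suc (Suc n)) b - zs (Suc n) b) \<le> zn B (\<lambda>b. zs (Suc n) b - zs n b) / 2"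
        unfolding zs_Suc[of "Suc n"] unfolding zs_Suc[of n] using lip[OF Tball[OF zsb[of n]] zsb[of n]] by (simp add: zs_Suc)
      also have "\<dots> \<le> \<rho> * (1/2)^n / 2" using Suc by simp
      finally show ?case by simp
    qed
    have difb: "\<bar>zs (Suc n) b - zs n b\<bar> \<le> \<rho> * (1/2)^n" if "b \<in> B" for b n
    proof -
      have "\<bar>zs (Suc n) b - zs n b\<bar> \<le> zn B (\<lambda>b. zs (Suc n) b - zs n b)"
        unfolding zn_def using that fB by (intro member_le_sum) auto
      then show ?thesis using dif[of n] by linarith
    qed
    have summ: "summable (\<lambda>n. zs (Suc n) b - zs n b)" if "b \<in> B" for b
    proof (rule summable_comparison_test)
      show "\<exists>N. \<forall>n\<ge>N. norm (zs (Suc n) b - zs n b) \<le> \<rho> * (1/2)^n"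
        by (intro exI[of _ 0] allI impI) (simp add: difb[OF that])
      show "summable (\<lambda>n. \<rho> * (1/2::real)^n)" by (intro summable_mult summable_geometric) simp
    qed
    define L where "L b = suminf (\<lambda>n. zs (Suc n) b - zs n b)" for b
    have zs0: "zs 0 b = 0" for b by (simp add: zs_def)
    have conv: "(\<lambda>n. zs n b) \<longlonglongrightarrow> L b" if "b \<in> B" for b
    proof -
      have eq: "(\<lambda>n. \<Sum>i<n. zs (Suc i) b - zs i b) = (\<lambda>n. zs n b)"
      proof
        fix n show "(\<Sum>i<n. zs (Suc i) b - zs i b) = zs n b"
          using sum_lessThan_telescope[of "\<lambda>i. zs i b" n] zs0[of b] by simp
      qed
      have "(\<lambda>n. \<Sum>i<n. zs (Suc i) b - zs i b) \<longlonglongrightarrow> L b"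
        unfolding L_def by (rule summable_LIMSEQ[OF summ[OF that]])
      then show ?thesis by (simp only: eq)
    qed
    have WL: "(\<lambda>n. Wz B W (zs n) v k) \<longlonglongrightarrow> Wz B W L v k" for v k
      unfolding Wz_def by (intro tendsto_sum tendsto_mult conv tendsto_const)
    have TL: "(\<lambda>n. T (zs n) b) \<longlonglongrightarrow> T L b" for b
      unfolding T_def by (intro tendsto_diff tendsto_divide tendsto_const beta_tendsto WL) auto
    have fixL: "T L b = L b" if "b \<in> B" for b
    proof -
      have "(\<lambda>n. zs (Suc n) b) \<longlonglongrightarrow> L b" using LIMSEQ_Suc[OF conv[OF that]] .
      moreover have "(\<lambda>n. zs (Suc n) b) \<longlonglongrightarrow> T L b" unfolding zs_Suc by (rule TL)
      ultimately have "L b = T L b" by (rule LIMSEQ_unique)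
      then show ?thesis by simp
    qed
    have zL: "zn B L \<le> \<rho>"
    proof (rule LIMSEQ_le_const2)
      show "(\<lambda>n. zn B (zs n)) \<longlonglongrightarrow> zn B L" unfolding zn_def by (intro tendsto_sum tendsto_rabs conv)
      show "\<exists>N. \<forall>n\<ge>N. zn B (zs n) \<le> \<rho>" using zsb by auto
    qed
    define w where "w = Wz B W L"
    have nw: "nrm V d w \<le> \<epsilon>"
    proof -
      have "nrm V d w \<le> Om * zn B L" unfolding w_def by (rule nW)
      also have "\<dots> \<le> Om * \<rho>" using zL Om1 by (intro mult_left_mono) auto
      finally show ?thesis using rhoe by linarith
    qed
    have eqs: "beta d b (\<lambda>v k. c v k + w v k) (\<lambda>v k. c v k + w v k) = y b" if b: "b \<in> B" for b
    proof -
      have g1: "beta d b (\<lambda>v k. c v k + w v k) (\<lambda>v k. c v k + w v k) = beta d b c c + 2 * beta d b c w + beta d b w w"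
        by (rule gg_add)
      have g2: "beta d b ?D w = beta d b c w - beta d b p0 w" by (rule beta_diff1)
      have "beta d b p0 w = (\<Sum>b'\<in>B. L b' * beta d b p0 (W b'))" unfolding w_def Wz_def by (rule beta_sum2)
      also have "\<dots> = (\<Sum>b'\<in>B. if b = b' then L b' else 0)" using dual b by (intro sum.cong) auto
      also have "\<dots> = L b" using b fB by simp
      finally have g3: "beta d b p0 w = L b" .
      have g4: "L b = (y b - beta d b c c) / 2 - beta d b ?D w - beta d b w w / 2"
        using fixL[OF b] unfolding T_def w_def by simp
      have alg: "\<And>lhs A X Q P Dw Lb yb :: real. lhs = A + 2 * X + Q \<Longrightarrow> Dw = X - P \<Longrightarrow> P = Lb \<Longrightarrow>
          Lb = (yb - A) / 2 - Dw - Q / 2 \<Longrightarrow> lhs = yb" by (simp add: field_simps)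
      show ?thesis by (rule alg[OF g1 g2 g3 g4])
    qed
    show "\<exists>w. nrm V d w \<le> \<epsilon> \<and> (\<forall>b\<in>B. beta d b (\<lambda>v k. c v k + w v k) (\<lambda>v k. c v k + w v k) = y b)"
      using nw eqs by blast
  qed
qed


lemma transfer_edges:
  assumes fV: "finite V" and fF: "finite F0" and good: "\<forall>e\<in>F0. goodE V e"
    and B1: "B1 \<subseteq> F0" "card B1 = rig_rank d F0"
    and bi: "bindep d (\<lambda>v k. (s v k + p v k) / 2) B1"
    and eqs: "\<forall>b\<in>B1. beta d b s s = beta d b p p"
    and e: "e \<in> F0"
  shows "beta d e s s = beta d e p p"
proof (cases "e \<in> B1")
  case True then show ?thesis using eqs by blast
next
  case False
  let ?m = "\<lambda>v k. (s v k + p v k) / 2"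
  have fB1: "finite B1" using B1(1) fF finite_subset by blast
  have nbi: "\<not> bindep d ?m (insert e B1)"
  proof
    assume bi2: "bindep d ?m (insert e B1)"
    have sub: "insert e B1 \<subseteq> F0" using B1(1) e by blast
    have "\<forall>x\<in>insert e B1. goodE V x" using sub good by blast
    then have "rows_indep d ?m (insert e B1)" using bindep_rows_indep[OF fV _ _ bi2] fB1 by blast
    then have "card (insert e B1) \<le> rows_rank d ?m F0" using card_le_rows_rank[OF fF sub] by blast
    also have "\<dots> \<le> rig_rank d F0" by (rule rows_rank_le_rig[OF fF])
    finally have "card (insert e B1) \<le> card B1" using B1(2) by simp
    then show False using fB1 False by simp
  qed
  obtain a where a: "\<forall>w. beta d e ?m w = (\<Sum>b\<in>B1. a b * beta d b ?m w)"
    using span_lemma[OF fB1 False bi nbi] by blast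
  show ?thesis by (rule midpoint_lemma[OF a eqs])
qed

lemma nrm_box:
  assumes "\<forall>v\<in>V. \<forall>k<d. \<bar>x v k\<bar> \<le> t"
  shows "nrm V d x \<le> real (card (V \<times> {..<d})) * t"
proof -
  have "nrm V d x \<le> (\<Sum>i\<in>V \<times> {..<d}. t)" unfolding nrm_def
    by (rule sum_mono) (use assms in auto)
  then show ?thesis by simp
qed


lemma realcore:
  assumes fV: "finite V"
    and Esub: "E \<subseteq> {{u, v} | u v. u \<in> V \<and> v \<in> V \<and> u \<noteq> v}"
    and E12: "E1 \<union> E2 = E" "E1 \<inter> E2 = {}"
    and rank: "rig_rank d E = rig_rank d E1 + rig_rank d E2"
  shows "\<exists>p0 \<eta>. \<eta> > 0 \<and> (\<forall>p q. (\<forall>v\<in>V. \<forall>k<d. \<bar>p v k - p0 v k\<bar> \<le> \<eta> \<and> \<bar>q v k - p0 v k\<bar> \<le> \<eta>) \<longrightarrow>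
      (\<exists>s. (\<forall>e\<in>E1. beta d e s s = beta d e p p) \<and> (\<forall>e\<in>E2. beta d e s s = beta d e q q)))"
proof -
  have "E \<subseteq> Pow V" using Esub by blast
  then have fE: "finite E" using fV finite_subset by blast
  have good: "\<forall>e\<in>E. goodE V e" by (meson Esub ends_good subsetD)
  have fE1: "finite E1" "finite E2" using fE E12 by auto
  have good1: "\<forall>e\<in>E1. goodE V e" "\<forall>e\<in>E2. goodE V e" using good E12 by auto
  obtain p0 where p0: "rows_rank d p0 E = rig_rank d E" using rig_attained[OF fE] by blast
  obtain B where B: "B \<subseteq> E" "rows_indep d p0 B" "card B = rows_rank d p0 E"
    using rows_rank_attained[OF fE] by blast
  have fB: "finite B" using B(1) fE finite_subset by blast
  have goodB: "\<forall>e\<in>B. goodE V e" using B(1) good by blast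
  have biB: "bindep d p0 B" using rows_indep_bindep[OF fV goodB fB B(2)] .
  define B1 where "B1 = B \<inter> E1"
  define B2 where "B2 = B \<inter> E2"
  have BU: "B = B1 \<union> B2" "B1 \<inter> B2 = {}" using B(1) E12 by (auto simp: B1_def B2_def)
  have cB: "card B = card B1 + card B2" using BU fB by (simp add: card_Un_disjoint)
  have c1: "card B1 \<le> rig_rank d E1"
  proof -
    have "bindep d p0 B1" using bindep_subset[OF biB _ fB] by (simp add: B1_def)
    moreover have "\<forall>e\<in>B1. goodE V e" "finite B1" using goodB fB by (auto simp: B1_def)
    ultimately have "rows_indep d p0 B1" using bindep_rows_indep[OF fV] by blast
    then have "card B1 \<le> rows_rank d p0 E1" using card_le_rows_rank[OF fE1(1)] by (simp add: B1_def)
    then show ?thesis using rows_rank_le_rig[OF fE1(1), of d p0] by linarith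
  qed
  have c2: "card B2 \<le> rig_rank d E2"
  proof -
    have "bindep d p0 B2" using bindep_subset[OF biB _ fB] by (simp add: B2_def)
    moreover have "\<forall>e\<in>B2. goodE V e" "finite B2" using goodB fB by (auto simp: B2_def)
    ultimately have "rows_indep d p0 B2" using bindep_rows_indep[OF fV] by blast
    then have "card B2 \<le> rows_rank d p0 E2" using card_le_rows_rank[OF fE1(2)] by (simp add: B2_def)
    then show ?thesis using rows_rank_le_rig[OF fE1(2), of d p0] by linarith
  qed
  have cB1: "card B1 = rig_rank d E1" and cB2: "card B2 = rig_rank d E2"
    using c1 c2 cB rank p0 B(3) by linarith+
  obtain W where W: "\<forall>b\<in>B. \<forall>b'\<in>B. beta d b p0 (W b') = (if b = b' then 1 else 0)"
    using dual_beta[OF fV goodB fB biB] by blast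
  define Om where "Om = 1 + (\<Sum>b\<in>B. nrm V d (W b))"
  have Om1: "Om \<ge> 1" unfolding Om_def by (simp add: sum_nonneg nrm_nonneg)
  have OmW: "nrm V d (W b) \<le> Om" if "b \<in> B" for b
  proof -
    have "nrm V d (W b) \<le> (\<Sum>b\<in>B. nrm V d (W b))" using fB that by (intro member_le_sum) (auto simp: nrm_nonneg)
    then show ?thesis unfolding Om_def by simp
  qed
  define K where "K = real (card B) + 1"
  have K1: "K \<ge> 1" unfolding K_def by simp
  define d0 where "d0 = 1 / (2 * K * Om)"
  have d00: "d0 > 0" unfolding d0_def using K1 Om1 by simp
  have near: "bindep d m B" if m: "nrm V d (\<lambda>v k. m v k - p0 v k) < d0" for m
  proof (rule bindep_near[OF fB W], intro ballI)
    fix b' assume b': "b' \<in> B"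
    let ?D = "\<lambda>v k. m v k - p0 v k"
    have "(\<Sum>b\<in>B. \<bar>beta d b ?D (W b')\<bar>) \<le> (\<Sum>b\<in>B. d0 * Om)"
    proof (rule sum_mono)
      fix b assume b: "b \<in> B"
      have "\<bar>beta d b ?D (W b')\<bar> \<le> nrm V d ?D * nrm V d (W b')"
        by (rule beta_bound[OF bspec[OF goodB b] fV])
      also have "\<dots> \<le> d0 * Om" using m OmW[OF b'] d00 by (intro mult_mono) (auto simp: nrm_nonneg)
      finally show "\<bar>beta d b ?D (W b')\<bar> \<le> d0 * Om" .
    qed
    also have "\<dots> = real (card B) * d0 * Om" by simp
    also have "\<dots> = real (card B) / (2 * K)" unfolding d0_def using Om1 K1 by (simp add: field_simps)
    also have "\<dots> < 1" using K1 unfolding K_def by (simp add: field_simps)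
    finally show "(\<Sum>b\<in>B. \<bar>beta d b ?D (W b')\<bar>) < 1" .
  qed
  have transfer1: "\<forall>e\<in>E1. beta d e s s = beta d e p p"
    if m: "nrm V d (\<lambda>v k. (s v k + p v k) / 2 - p0 v k) < d0" and eq: "\<forall>b\<in>B1. beta d b s s = beta d b p p" for s p
  proof
    fix e assume "e \<in> E1"
    have "bindep d (\<lambda>v k. (s v k + p v k) / 2) B1"
      using bindep_subset[OF near[OF m] _ fB] by (simp add: B1_def)
    then show "beta d e s s = beta d e p p"
      using transfer_edges[OF fV fE1(1) good1(1) _ cB1 _ eq \<open>e \<in> E1\<close>] by (simp add: B1_def)
  qed
  have transfer2: "\<forall>e\<in>E2. beta d e s s = beta d e p p"
    if m: "nrm V d (\<lambda>v k. (s v k + p v k) / 2 - p0 v k) < d0" and eq: "\<forall>b\<in>B2. beta d b s s = beta d b p p" for s p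
  proof
    fix e assume "e \<in> E2"
    have "bindep d (\<lambda>v k. (s v k + p v k) / 2) B2"
      using bindep_subset[OF near[OF m] _ fB] by (simp add: B2_def)
    then show "beta d e s s = beta d e p p"
      using transfer_edges[OF fV fE1(2) good1(2) _ cB2 _ eq \<open>e \<in> E2\<close>] by (simp add: B2_def)
  qed
  obtain \<delta> where d: "\<delta> > 0" and contr: "\<forall>c y. nrm V d (\<lambda>v k. c v k - p0 v k) \<le> \<delta> \<longrightarrow> (\<forall>b\<in>B. \<bar>y b - beta d b c c\<bar> \<le> \<delta>) \<longrightarrow>
     (\<exists>w. nrm V d w \<le> d0 / 2 \<and> (\<forall>b\<in>B. beta d b (\<lambda>v k. c v k + w v k) (\<lambda>v k. c v k + w v k) = y b))"
    using contraction[OF fV fB goodB W, of "d0 / 2"] d00 by auto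
  define N where "N = real (card (V \<times> {..<d})) + 1"
  have N1: "N \<ge> 1" unfolding N_def by simp
  define t where "t = min (min 1 \<delta>) (min (d0 / 4) (\<delta> / (4 * nrm V d p0 + 4)))"
  have t0: "t > 0" unfolding t_def using d d00 nrm_nonneg[of V d p0] by simp
  have t1: "t \<le> 1" "t \<le> \<delta>" "t \<le> d0 / 4" "t * (4 * nrm V d p0 + 4) \<le> \<delta>"
  proof -
    have a: "t \<le> 1" "t \<le> \<delta>" "t \<le> d0 / 4" "t \<le> \<delta> / (4 * nrm V d p0 + 4)" unfolding t_def
      by (rule min.coboundedI1[OF min.cobounded1], rule min.coboundedI1[OF min.cobounded2],
          rule min.coboundedI2[OF min.cobounded1], rule min.coboundedI2[OF min.cobounded2])
    have pos: "4 * nrm V d p0 + 4 > 0" using nrm_nonneg[of V d p0] by linarith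
    have "t * (4 * nrm V d p0 + 4) \<le> \<delta>" using a(4) pos by (simp add: le_divide_eq)
    then show "t \<le> 1" "t \<le> \<delta>" "t \<le> d0 / 4" "t * (4 * nrm V d p0 + 4) \<le> \<delta>" using a by auto
  qed
  define \<eta> where "\<eta> = t / N"
  have eta0: "\<eta> > 0" unfolding \<eta>_def using t0 N1 by simp
  show ?thesis
  proof (rule exI[of _ p0], rule exI[of _ \<eta>], intro conjI eta0 allI impI)
    fix p q assume box: "\<forall>v\<in>V. \<forall>k<d. \<bar>p v k - p0 v k\<bar> \<le> \<eta> \<and> \<bar>q v k - p0 v k\<bar> \<le> \<eta>"
    have Nt: "real (card (V \<times> {..<d})) * \<eta> \<le> t" unfolding \<eta>_def N_def using t0 by (simp add: field_simps)
    have "\<forall>v\<in>V. \<forall>k<d. \<bar>(\<lambda>v k. p v k - p0 v k) v k\<bar> \<le> \<eta>" using box by simp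
    from nrm_box[OF this] have np: "nrm V d (\<lambda>v k. p v k - p0 v k) \<le> t" using Nt by linarith
    have "\<forall>v\<in>V. \<forall>k<d. \<bar>(\<lambda>v k. q v k - p0 v k) v k\<bar> \<le> \<eta>" using box by simp
    from nrm_box[OF this] have nq: "nrm V d (\<lambda>v k. q v k - p0 v k) \<le> t" using Nt by linarith
    have nqp: "nrm V d (\<lambda>v k. q v k - p v k) \<le> 2 * t"
    proof -
      have "(\<lambda>v k. q v k - p v k) = (\<lambda>v k. (q v k - p0 v k) - (p v k - p0 v k))" by simp
      then have "nrm V d (\<lambda>v k. q v k - p v k) \<le> nrm V d (\<lambda>v k. q v k - p0 v k) + nrm V d (\<lambda>v k. p v k - p0 v k)"
        using nrm_diff[of V d "\<lambda>v k. q v k - p0 v k" "\<lambda>v k. p v k - p0 v k"] by simp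
      then show ?thesis using np nq by linarith
    qed
    have nqp2: "nrm V d (\<lambda>v k. q v k + p v k) \<le> 2 * nrm V d p0 + 2 * t"
    proof -
      have e1: "(\<lambda>v k. q v k + p v k) = (\<lambda>v k. (q v k - p0 v k) + ((p v k - p0 v k) + 2 * p0 v k))" by (simp add: fun_eq_iff)
      have "nrm V d (\<lambda>v k. (p v k - p0 v k) + 2 * p0 v k) \<le> nrm V d (\<lambda>v k. p v k - p0 v k) + nrm V d (\<lambda>v k. 2 * p0 v k)"
        by (rule nrm_add)
      moreover have "nrm V d (\<lambda>v k. 2 * p0 v k) = 2 * nrm V d p0" using nrm_scale[of V d 2 p0] by simp
      moreover have "nrm V d (\<lambda>v k. q v k + p v k) \<le> nrm V d (\<lambda>v k. q v k - p0 v k) + nrm V d (\<lambda>v k. (p v k - p0 v k) + 2 * p0 v k)"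
        unfolding e1 by (rule nrm_add)
      ultimately show ?thesis using np nq by linarith
    qed
    define y where "y = (\<lambda>b. if b \<in> B1 then beta d b p p else beta d b q q)"
    have yb: "\<forall>b\<in>B. \<bar>y b - beta d b p p\<bar> \<le> \<delta>"
    proof
      fix b assume b: "b \<in> B"
      show "\<bar>y b - beta d b p p\<bar> \<le> \<delta>"
      proof (cases "b \<in> B1")
        case True then show ?thesis using d by (simp add: y_def)
      next
        case False
        have "\<bar>y b - beta d b p p\<bar> = \<bar>beta d b (\<lambda>v k. q v k - p v k) (\<lambda>v k. q v k + p v k)\<bar>"
          using False by (simp add: y_def gg_diff)
        also have "\<dots> \<le> nrm V d (\<lambda>v k. q v k - p v k) * nrm V d (\<lambda>v k. q v k + p v k)"
          by (rule beta_bound[OF bspec[OF goodB b] fV])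
        also have "\<dots> \<le> (2 * t) * (2 * nrm V d p0 + 2 * t)"
          using nqp nqp2 t0 by (intro mult_mono) (auto simp: nrm_nonneg)
        also have "\<dots> \<le> t * (4 * nrm V d p0 + 4)" using t1 t0 by (simp add: algebra_simps mult_left_mono)
        also have "\<dots> \<le> \<delta>" using t1 by simp
        finally show ?thesis .
      qed
    qed
    obtain w where w: "nrm V d w \<le> d0 / 2" "\<forall>b\<in>B. beta d b (\<lambda>v k. p v k + w v k) (\<lambda>v k. p v k + w v k) = y b"
    proof -
      have "nrm V d (\<lambda>v k. p v k - p0 v k) \<le> \<delta>" using np t1(2) by linarith
      from contr[rule_format, of p y, OF this yb[rule_format]] show ?thesis using that by blast
    qed
    define s where "s = (\<lambda>v k. p v k + w v k)"
    have m1: "nrm V d (\<lambda>v k. (s v k + p v k) / 2 - p0 v k) < d0"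
    proof -
      have "(\<lambda>v k. (s v k + p v k) / 2 - p0 v k) = (\<lambda>v k. (p v k - p0 v k) + (1/2) * w v k)"
        unfolding s_def by (simp add: fun_eq_iff field_simps)
      then have "nrm V d (\<lambda>v k. (s v k + p v k) / 2 - p0 v k) \<le> nrm V d (\<lambda>v k. p v k - p0 v k) + (1/2) * nrm V d w"
        using nrm_add[of V d "\<lambda>v k. p v k - p0 v k" "\<lambda>v k. (1/2) * w v k"] nrm_scale[of V d "1/2" w] by simp
      then show ?thesis using np w(1) t1(3) d00 by linarith
    qed
    have m2: "nrm V d (\<lambda>v k. (s v k + q v k) / 2 - p0 v k) < d0"
    proof -
      have eqf: "(\<lambda>v k. (s v k + q v k) / 2 - p0 v k) = (\<lambda>v k. (1/2) * (p v k - p0 v k) + ((1/2) * (q v k - p0 v k) + (1/2) * w v k))"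
        unfolding s_def by (simp add: fun_eq_iff field_simps)
      have bnd: "nrm V d (\<lambda>v k. (1/2) * (p v k - p0 v k) + ((1/2) * (q v k - p0 v k) + (1/2) * w v k))
          \<le> (1/2) * nrm V d (\<lambda>v k. p v k - p0 v k) + ((1/2) * nrm V d (\<lambda>v k. q v k - p0 v k) + (1/2) * nrm V d w)"
      proof -
        have a: "nrm V d (\<lambda>v k. (1/2) * (p v k - p0 v k) + ((1/2) * (q v k - p0 v k) + (1/2) * w v k))
          \<le> nrm V d (\<lambda>v k. (1/2) * (p v k - p0 v k)) + nrm V d (\<lambda>v k. (1/2) * (q v k - p0 v k) + (1/2) * w v k)"
          by (rule nrm_add)
        have b: "nrm V d (\<lambda>v k. (1/2) * (q v k - p0 v k) + (1/2) * w v k)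
          \<le> nrm V d (\<lambda>v k. (1/2) * (q v k - p0 v k)) + nrm V d (\<lambda>v k. (1/2) * w v k)"
          by (rule nrm_add)
        have c: "nrm V d (\<lambda>v k. (1/2) * (p v k - p0 v k)) = (1/2) * nrm V d (\<lambda>v k. p v k - p0 v k)"
          using nrm_scale[of V d "1/2" "\<lambda>v k. p v k - p0 v k"] by simp
        have c2: "nrm V d (\<lambda>v k. (1/2) * (q v k - p0 v k)) = (1/2) * nrm V d (\<lambda>v k. q v k - p0 v k)"
          using nrm_scale[of V d "1/2" "\<lambda>v k. q v k - p0 v k"] by simp
        have c3: "nrm V d (\<lambda>v k. (1/2) * w v k) = (1/2) * nrm V d w"
          using nrm_scale[of V d "1/2" w] by simp
        show ?thesis using a b c c2 c3 by linarith
      qed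
      show ?thesis unfolding eqf using bnd np nq w(1) t1(3) d00 by linarith
    qed
    have eq1: "\<forall>b\<in>B1. beta d b s s = beta d b p p"
      using w(2) BU by (auto simp: s_def y_def)
    have eq2: "\<forall>b\<in>B2. beta d b s s = beta d b q q"
    proof
      fix b assume b: "b \<in> B2"
      then have "b \<notin> B1" "b \<in> B" using BU by auto
      then show "beta d b s s = beta d b q q" using w(2) by (simp add: s_def y_def)
    qed
    show "\<exists>s. (\<forall>e\<in>E1. beta d e s s = beta d e p p) \<and> (\<forall>e\<in>E2. beta d e s s = beta d e q q)"
      using transfer1[OF m1 eq1] transfer2[OF m2 eq2] by blast
  qed
qed


lemma ends_in:
  assumes "e \<in> {{u, v} | u v. u \<in> V \<and> v \<in> V \<and> u \<noteq> v}"
  shows "fst (ends e) \<in> e" "snd (ends e) \<in> e"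
proof -
  have "e = {fst (ends e), snd (ends e)}" using ends_good[OF assms] by blast
  then show "fst (ends e) \<in> e" "snd (ends e) \<in> e" by (metis insertI1, metis insertI1 insert_commute)
qed

lemma meas_cong:
  assumes "\<forall>e\<in>F. fst (ends e) \<in> e \<and> snd (ends e) \<in> e"
    and "\<forall>v\<in>\<Union>F. \<forall>k<d. P v k = Q v k"
  shows "meas_map d F P = meas_map d F Q"
proof
  fix e show "meas_map d F P e = meas_map d F Q e"
  proof (cases "e \<in> F")
    case True
    obtain u w where uw: "ends e = (u, w)" by (cases "ends e")
    have "u \<in> \<Union>F" "w \<in> \<Union>F" using assms(1) True uw by force+
    then have pu: "\<And>k. k < d \<Longrightarrow> P u k = Q u k" "\<And>k. k < d \<Longrightarrow> P w k = Q w k" using assms(2) by blast+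
    have "(\<Sum>k<d. (P u k - P w k)^2) = (\<Sum>k<d. (Q u k - Q w k)^2)"
      by (rule sum.cong) (auto simp: pu)
    then show ?thesis unfolding meas_map_def using True uw by simp
  next
    case False then show ?thesis unfolding meas_map_def by simp
  qed
qed

lemma meas_real:
  assumes "goodE V e" "\<forall>v\<in>V. \<forall>k<d. P v k = complex_of_real (x v k)"
  shows "(case ends e of (u, v) \<Rightarrow> \<Sum>k<d. (P u k - P v k)^2) = complex_of_real (beta d e x x)"
proof (cases "ends e")
  case (Pair u w)
  have uw: "u \<in> V" "w \<in> V" using assms(1) Pair unfolding goodE_def by auto
  have "(\<Sum>k<d. (P u k - P w k)^2) = (\<Sum>k<d. complex_of_real ((x u k - x w k) * (x u k - x w k)))"
    using assms(2) uw by (intro sum.cong) (auto simp: power2_eq_square)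
  also have "\<dots> = complex_of_real (beta d e x x)" unfolding beta_def Pair by (simp add: of_real_sum)
  finally show ?thesis using Pair by simp
qed

lemma meas_pf:
  assumes "\<forall>e\<in>F. fst (ends e) \<in> e \<and> snd (ends e) \<in> e" "e \<in> F"
  shows "(\<lambda>P. meas_map d F (\<lambda>v k. P (v, k)) e) \<in> polyfun (\<Union>F \<times> {..<d})"
proof (cases "ends e")
  case (Pair u w)
  have uw: "u \<in> \<Union>F" "w \<in> \<Union>F" using assms Pair by force+
  have "(\<lambda>P. \<Sum>k<d. (P (u, k) - P (w, k))^2) \<in> polyfun (\<Union>F \<times> {..<d})"
    by (intro pf_sum pf_pow2 pf_diff ballI polyfun.pf_var) (use uw in auto)
  then show ?thesis unfolding meas_map_def using assms(2) Pair by simp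
qed

lemma infinite_box: "\<eta> > 0 \<Longrightarrow> infinite (complex_of_real ` {a - \<eta> .. a + \<eta>})"
proof
  assume "\<eta> > 0" "finite (complex_of_real ` {a - \<eta> .. a + \<eta>})"
  then have "finite {a - \<eta> .. a + \<eta>}" using finite_imageD inj_on_def by (metis of_real_eq_iff)
  then show False using \<open>\<eta> > 0\<close> infinite_Icc[of "a - \<eta>" "a + \<eta>"] by simp
qed


theorem lemma3p1:
  fixes d :: nat and V :: "'v set" and E E1 E2 :: "'v set set"
  assumes "d \<ge> 1"
    and "finite V"
    and "E \<subseteq> {{u, v} | u v. u \<in> V \<and> v \<in> V \<and> u \<noteq> v}"
    and "E1 \<union> E2 = E" and "E1 \<inter> E2 = {}" and "E1 \<noteq> {}" and "E2 \<noteq> {}"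
    and "rig_rank d E = rig_rank d E1 + rig_rank d E2"
  shows "meas_variety d V E =
    {x \<in> cspace E. restrict_to E1 x \<in> meas_variety d (\<Union>E1) E1
                 \<and> restrict_to E2 x \<in> meas_variety d (\<Union>E2) E2}"
proof -
  note fV = assms(2) and Esub = assms(3) and E12 = assms(4,5)
  have endsE: "\<forall>e\<in>E. fst (ends e) \<in> e \<and> snd (ends e) \<in> e" by (meson Esub ends_in subsetD)
  have endsE1: "\<forall>e\<in>E1. fst (ends e) \<in> e \<and> snd (ends e) \<in> e" using endsE E12 by blast
  have endsE2: "\<forall>e\<in>E2. fst (ends e) \<in> e \<and> snd (ends e) \<in> e" using endsE E12 by blast
  have goodAll: "\<forall>e\<in>E. goodE V e" by (meson Esub ends_good subsetD)
  have EV: "\<Union>E \<subseteq> V" using Esub by blast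
  have part: "restrict_to F x \<in> meas_variety d (\<Union>F) F" if F: "F \<subseteq> E" and x: "x \<in> meas_variety d V E" for F x
  proof -
    have xc: "x \<in> cspace E" and xz: "\<forall>f\<in>polyfun E. (\<forall>y\<in>meas_map d E ` config_space d V. f y = 0) \<longrightarrow> f x = 0"
      using x unfolding meas_variety_def zariski_closure_def by auto
    have "restrict_to F x \<in> cspace F" by (simp add: cspace_def restrict_to_def)
    moreover have "f (restrict_to F x) = 0"
      if f: "f \<in> polyfun F" and van: "\<forall>y\<in>meas_map d F ` config_space d (\<Union>F). f y = 0" for f
    proof -
      have g: "(\<lambda>y. f (restrict_to F y)) \<in> polyfun E"
      proof (rule pf_comp[OF f], intro ballI)
        fix i assume "i \<in> F"
        then have "(\<lambda>y. y i) \<in> polyfun E" using F by (intro polyfun.pf_var) blast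
        then show "(\<lambda>y. restrict_to F y i) \<in> polyfun E" using \<open>i \<in> F\<close> by (simp add: restrict_to_def)
      qed
      have "\<forall>y\<in>meas_map d E ` config_space d V. f (restrict_to F y) = 0"
      proof
        fix y assume "y \<in> meas_map d E ` config_space d V"
        then obtain p where p: "p \<in> config_space d V" "y = meas_map d E p" by blast
        define p' where "p' = (\<lambda>v k. if v \<in> \<Union>F \<and> k < d then p v k else 0)"
        have p'c: "p' \<in> config_space d (\<Union>F)" unfolding config_space_def p'_def by auto
        have "restrict_to F (meas_map d E p) = meas_map d F p"
          unfolding restrict_to_def meas_map_def using F by (auto simp: fun_eq_iff)
        also have "\<dots> = meas_map d F p'"
          by (rule meas_cong) (use endsE F in \<open>auto simp: p'_def\<close>)
        finally have "restrict_to F y = meas_map d F p'" using p by simp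
        then show "f (restrict_to F y) = 0" using van p'c by simp
      qed
      note h = this
      have "(\<lambda>y. f (restrict_to F y)) x = 0" by (rule xz[rule_format, OF g]) (use h in blast)
      then show ?thesis by simp
    qed
    ultimately show ?thesis unfolding meas_variety_def zariski_closure_def by blast
  qed
  define comb where "comb a b = (\<lambda>e. if e \<in> E1 then a e else b e)" for a b :: "'v set \<Rightarrow> complex"
  show ?thesis
  proof (intro equalityI subsetI)
    fix x assume x: "x \<in> meas_variety d V E"
    have "x \<in> cspace E" using x unfolding meas_variety_def zariski_closure_def by auto
    then show "x \<in> {x \<in> cspace E. restrict_to E1 x \<in> meas_variety d (\<Union>E1) E1 \<and> restrict_to E2 x \<in> meas_variety d (\<Union>E2) E2}"
      using part[OF _ x, of E1] part[OF _ x, of E2] E12 by blast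
  next
    fix x assume "x \<in> {x \<in> cspace E. restrict_to E1 x \<in> meas_variety d (\<Union>E1) E1 \<and> restrict_to E2 x \<in> meas_variety d (\<Union>E2) E2}"
    then have xc: "x \<in> cspace E" and x1: "restrict_to E1 x \<in> meas_variety d (\<Union>E1) E1"
      and x2: "restrict_to E2 x \<in> meas_variety d (\<Union>E2) E2" by auto
    have "f x = 0" if f: "f \<in> polyfun E" and van: "\<forall>y\<in>meas_map d E ` config_space d V. f y = 0" for f
    proof -
      obtain p0 \<eta> where eta: "\<eta> > 0" and core: "\<forall>p q. (\<forall>v\<in>V. \<forall>k<d. \<bar>p v k - p0 v k\<bar> \<le> \<eta> \<and> \<bar>q v k - p0 v k\<bar> \<le> \<eta>) \<longrightarrow>
          (\<exists>s. (\<forall>e\<in>E1. beta d e s s = beta d e p p) \<and> (\<forall>e\<in>E2. beta d e s s = beta d e q q))"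
        using realcore[OF fV Esub E12 assms(8)] by blast
      have A1: "f (comb (meas_map d E1 (\<lambda>v k. complex_of_real (p v k))) (meas_map d E2 (\<lambda>v k. complex_of_real (q v k)))) = 0"
        if box: "\<forall>v\<in>V. \<forall>k<d. \<bar>p v k - p0 v k\<bar> \<le> \<eta> \<and> \<bar>q v k - p0 v k\<bar> \<le> \<eta>" for p q
      proof -
        obtain s where s1: "\<forall>e\<in>E1. beta d e s s = beta d e p p" and s2: "\<forall>e\<in>E2. beta d e s s = beta d e q q"
          using core box by blast
        define s' where "s' = (\<lambda>v k. if v \<in> V \<and> k < d then complex_of_real (s v k) else 0)"
        have sc: "s' \<in> config_space d V" unfolding config_space_def s'_def by auto
        have s'r: "\<forall>v\<in>V. \<forall>k<d. s' v k = complex_of_real (s v k)" by (simp add: s'_def)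
        have pr: "\<forall>v\<in>V. \<forall>k<d. (\<lambda>v k. complex_of_real (p v k)) v k = complex_of_real (p v k)" by simp
        have qr: "\<forall>v\<in>V. \<forall>k<d. (\<lambda>v k. complex_of_real (q v k)) v k = complex_of_real (q v k)" by simp
        have "meas_map d E s' = comb (meas_map d E1 (\<lambda>v k. complex_of_real (p v k))) (meas_map d E2 (\<lambda>v k. complex_of_real (q v k)))"
        proof
          fix e
          show "meas_map d E s' e = comb (meas_map d E1 (\<lambda>v k. complex_of_real (p v k))) (meas_map d E2 (\<lambda>v k. complex_of_real (q v k))) e"
          proof (cases "e \<in> E1")
            case True
            then have eE: "e \<in> E" and g: "goodE V e" using E12 goodAll by auto
            have "meas_map d E s' e = complex_of_real (beta d e s s)"
              unfolding meas_map_def using eE meas_real[OF g s'r] by simp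
            also have "\<dots> = complex_of_real (beta d e p p)" using s1 True by simp
            also have "\<dots> = meas_map d E1 (\<lambda>v k. complex_of_real (p v k)) e"
              unfolding meas_map_def using True meas_real[OF g pr] by simp
            finally show ?thesis using True by (simp add: comb_def)
          next
            case False
            show ?thesis
            proof (cases "e \<in> E2")
              case True
              then have eE: "e \<in> E" and g: "goodE V e" using E12 goodAll by auto
              have "meas_map d E s' e = complex_of_real (beta d e s s)"
                unfolding meas_map_def using eE meas_real[OF g s'r] by simp
              also have "\<dots> = complex_of_real (beta d e q q)" using s2 True by simp
              also have "\<dots> = meas_map d E2 (\<lambda>v k. complex_of_real (q v k)) e"
                unfolding meas_map_def using True meas_real[OF g qr] by simp
              finally show ?thesis using False by (simp add: comb_def)
            next
              case False2: False
              then have "e \<notin> E" using False E12 by blast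
              then show ?thesis using False False2 by (simp add: comb_def meas_map_def)
            qed
          qed
        qed
        moreover have "f (meas_map d E s') = 0" using van sc by blast
        ultimately show ?thesis by simp
      qed
      have A2: "f (comb (meas_map d E1 p) (meas_map d E2 (\<lambda>v k. complex_of_real (q v k)))) = 0"
        if qbox: "\<forall>v\<in>V. \<forall>k<d. \<bar>q v k - p0 v k\<bar> \<le> \<eta>" for p q
      proof -
        let ?X = "\<Union>E1 \<times> {..<d}"
        define H where "H = (\<lambda>P. f (comb (meas_map d E1 (\<lambda>v k. P (v, k))) (meas_map d E2 (\<lambda>v k. complex_of_real (q v k)))))"
        have Hpf: "H \<in> polyfun ?X" unfolding H_def
        proof (rule pf_comp[OF f], intro ballI)
          fix i assume "i \<in> E"
          show "(\<lambda>P. comb (meas_map d E1 (\<lambda>v k. P (v, k))) (meas_map d E2 (\<lambda>v k. complex_of_real (q v k))) i) \<in> polyfun ?X"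
          proof (cases "i \<in> E1")
            case True then show ?thesis using meas_pf[OF endsE1 True] by (simp add: comb_def)
          next
            case False then show ?thesis by (simp add: comb_def polyfun.pf_const)
          qed
        qed
        have V1: "\<Union>E1 \<subseteq> V" using EV E12 by blast
        have fin: "finite ?X" using finite_subset[OF V1 fV] by simp
        define S where "S = (\<lambda>i. complex_of_real ` {p0 (fst i) (snd i) - \<eta> .. p0 (fst i) (snd i) + \<eta>})"
        have infS: "\<forall>i\<in>?X. infinite (S i)" using infinite_box[OF eta] by (simp add: S_def)
        have vanH: "\<forall>P. (\<forall>i\<in>?X. P i \<in> S i) \<longrightarrow> H P = 0"
        proof (intro allI impI)
          fix P assume P: "\<forall>i\<in>?X. P i \<in> S i"
          define pr where "pr = (\<lambda>v k. if (v, k) \<in> ?X then Re (P (v, k)) else p0 v k)"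
          have Pr: "P (v, k) = complex_of_real (pr v k)" if "(v, k) \<in> ?X" for v k
          proof -
            have m: "P (v, k) \<in> complex_of_real ` {p0 v k - \<eta> .. p0 v k + \<eta>}" using bspec[OF P that] by (simp add: S_def)
            then obtain t where "P (v, k) = complex_of_real t" by blast
            then show ?thesis using that by (simp add: pr_def)
          qed
          have prbox: "\<forall>v\<in>V. \<forall>k<d. \<bar>pr v k - p0 v k\<bar> \<le> \<eta> \<and> \<bar>q v k - p0 v k\<bar> \<le> \<eta>"
          proof (intro ballI allI impI conjI)
            fix v k assume v: "v \<in> V" and k: "k < d"
            show "\<bar>q v k - p0 v k\<bar> \<le> \<eta>" using qbox v k by blast
            show "\<bar>pr v k - p0 v k\<bar> \<le> \<eta>"
            proof (cases "(v, k) \<in> ?X")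
              case True
              have m: "P (v, k) \<in> complex_of_real ` {p0 v k - \<eta> .. p0 v k + \<eta>}" using bspec[OF P True] by (simp add: S_def)
              then obtain t where t: "P (v, k) = complex_of_real t" "t \<in> {p0 v k - \<eta> .. p0 v k + \<eta>}" by blast
              then show ?thesis using True by (simp add: pr_def abs_le_iff)
            next
              case False
              have "pr v k = p0 v k" unfolding pr_def using False by (rule if_not_P)
              then show ?thesis using eta by simp
            qed
          qed
          have "meas_map d E1 (\<lambda>v k. P (v, k)) = meas_map d E1 (\<lambda>v k. complex_of_real (pr v k))"
            by (rule meas_cong[OF endsE1]) (use Pr in auto)
          then show "H P = 0" unfolding H_def using A1[OF prbox] by simp
        qed
        have "H (\<lambda>i. p (fst i) (snd i)) = 0" by (rule pf_identity[OF fin Hpf infS vanH])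
        then show ?thesis by (simp add: H_def)
      qed
      have A: "f (comb (meas_map d E1 p) (meas_map d E2 q)) = 0" for p q
      proof -
        let ?X = "\<Union>E2 \<times> {..<d}"
        define G where "G = (\<lambda>Q. f (comb (meas_map d E1 p) (meas_map d E2 (\<lambda>v k. Q (v, k)))))"
        have Gpf: "G \<in> polyfun ?X" unfolding G_def
        proof (rule pf_comp[OF f], intro ballI)
          fix i assume i: "i \<in> E"
          show "(\<lambda>Q. comb (meas_map d E1 p) (meas_map d E2 (\<lambda>v k. Q (v, k))) i) \<in> polyfun ?X"
          proof (cases "i \<in> E1")
            case True then show ?thesis by (simp add: comb_def polyfun.pf_const)
          next
            case False
            then have "i \<in> E2" using i E12 by blast
            then show ?thesis using meas_pf[OF endsE2 \<open>i \<in> E2\<close>] False by (simp add: comb_def)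
          qed
        qed
        have V2: "\<Union>E2 \<subseteq> V" using EV E12 by blast
        have fin: "finite ?X" using finite_subset[OF V2 fV] by simp
        define S where "S = (\<lambda>i. complex_of_real ` {p0 (fst i) (snd i) - \<eta> .. p0 (fst i) (snd i) + \<eta>})"
        have infS: "\<forall>i\<in>?X. infinite (S i)" using infinite_box[OF eta] by (simp add: S_def)
        have vanG: "\<forall>Q. (\<forall>i\<in>?X. Q i \<in> S i) \<longrightarrow> G Q = 0"
        proof (intro allI impI)
          fix Q assume Q: "\<forall>i\<in>?X. Q i \<in> S i"
          define qr where "qr = (\<lambda>v k. if (v, k) \<in> ?X then Re (Q (v, k)) else p0 v k)"
          have Qr: "Q (v, k) = complex_of_real (qr v k)" if "(v, k) \<in> ?X" for v k
          proof -
            have m: "Q (v, k) \<in> complex_of_real ` {p0 v k - \<eta> .. p0 v k + \<eta>}" using bspec[OF Q that] by (simp add: S_def)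
            then obtain t where "Q (v, k) = complex_of_real t" by blast
            then show ?thesis using that by (simp add: qr_def)
          qed
          have qrbox: "\<forall>v\<in>V. \<forall>k<d. \<bar>qr v k - p0 v k\<bar> \<le> \<eta>"
          proof (intro ballI allI impI)
            fix v k assume v: "v \<in> V" and k: "k < d"
            show "\<bar>qr v k - p0 v k\<bar> \<le> \<eta>"
            proof (cases "(v, k) \<in> ?X")
              case True
              have m: "Q (v, k) \<in> complex_of_real ` {p0 v k - \<eta> .. p0 v k + \<eta>}" using bspec[OF Q True] by (simp add: S_def)
              then obtain t where t: "Q (v, k) = complex_of_real t" "t \<in> {p0 v k - \<eta> .. p0 v k + \<eta>}" by blast
              then show ?thesis using True by (simp add: qr_def abs_le_iff)
            next
              case False
              have "qr v k = p0 v k" unfolding qr_def using False by (rule if_not_P)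
              then show ?thesis using eta by simp
            qed
          qed
          have "meas_map d E2 (\<lambda>v k. Q (v, k)) = meas_map d E2 (\<lambda>v k. complex_of_real (qr v k))"
            by (rule meas_cong[OF endsE2]) (use Qr in auto)
          then show "G Q = 0" unfolding G_def using A2[OF qrbox, of p] by simp
        qed
        have "G (\<lambda>i. q (fst i) (snd i)) = 0" by (rule pf_identity[OF fin Gpf infS vanG])
        then show ?thesis by (simp add: G_def)
      qed
      define x1 where "x1 = restrict_to E1 x"
      define x2 where "x2 = restrict_to E2 x"
      have C1: "f (comb x1 b) = 0" if b: "b \<in> meas_map d E2 ` config_space d (\<Union>E2)" for b
      proof -
        have F: "(\<lambda>a. f (comb a b)) \<in> polyfun E1"
        proof (rule pf_comp[OF f], intro ballI)
          fix i assume "i \<in> E"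
          show "(\<lambda>a. comb a b i) \<in> polyfun E1"
          proof (cases "i \<in> E1")
            case True then show ?thesis by (simp add: comb_def polyfun.pf_var)
          next
            case False then show ?thesis by (simp add: comb_def polyfun.pf_const)
          qed
        qed
        obtain q where q: "b = meas_map d E2 q" using b by blast
        have "\<forall>a\<in>meas_map d E1 ` config_space d (\<Union>E1). (\<lambda>a. f (comb a b)) a = 0"
        proof
          fix a assume "a \<in> meas_map d E1 ` config_space d (\<Union>E1)"
          then obtain p where "a = meas_map d E1 p" by blast
          then show "(\<lambda>a. f (comb a b)) a = 0" using A[of p q] q by simp
        qed
        moreover have z: "\<forall>g\<in>polyfun E1. (\<forall>y\<in>meas_map d E1 ` config_space d (\<Union>E1). g y = 0) \<longrightarrow> g x1 = 0"
          using x1 unfolding x1_def meas_variety_def zariski_closure_def by blast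
        ultimately have "(\<lambda>a. f (comb a b)) x1 = 0" using z[rule_format, OF F] by blast
        then show ?thesis by simp
      qed
      have C2: "f (comb x1 x2) = 0"
      proof -
        have G: "(\<lambda>b. f (comb x1 b)) \<in> polyfun E2"
        proof (rule pf_comp[OF f], intro ballI)
          fix i assume "i \<in> E"
          show "(\<lambda>b. comb x1 b i) \<in> polyfun E2"
          proof (cases "i \<in> E1")
            case True then show ?thesis by (simp add: comb_def polyfun.pf_const)
          next
            case False then have "i \<in> E2" using \<open>i \<in> E\<close> E12 by blast
            then show ?thesis using False by (simp add: comb_def polyfun.pf_var)
          qed
        qed
        have "\<forall>b\<in>meas_map d E2 ` config_space d (\<Union>E2). (\<lambda>b. f (comb x1 b)) b = 0" using C1 by simp
        moreover have z: "\<forall>g\<in>polyfun E2. (\<forall>y\<in>meas_map d E2 ` config_space d (\<Union>E2). g y = 0) \<longrightarrow> g x2 = 0"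
          using x2 unfolding x2_def meas_variety_def zariski_closure_def by blast
        ultimately have "(\<lambda>b. f (comb x1 b)) x2 = 0" using z[rule_format, OF G] by blast
        then show ?thesis by simp
      qed
      have "f x = f (comb x1 x2)"
        by (rule pf_dep[OF f]) (use E12 in \<open>auto simp: comb_def x1_def x2_def restrict_to_def\<close>)
      then show ?thesis using C2 by simp
    qed
    then show "x \<in> meas_variety d V E" unfolding meas_variety_def zariski_closure_def using xc by blast
  qed
qed


end
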